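(* Let $\Sigma$ be an alphabet and $\delta\in(0,1)$ be a sufficiently small constant. Let $\mathcal{P}\subseteq\Sigma^*$ be a property of strings that is $\varepsilon$-testable in the standard model using $q(m,\varepsilon)$ queries on inputs of length $m$, where $q(m,\varepsilon)=\Omega(\frac1\varepsilon)$. Then, for all $r\in\mathbb{N}$ and $t\le\frac{\delta\cdot r}{[q(m,\frac\varepsilon2)\log q(m,\frac\varepsilon2)]^2}$, the property $\mathcal{P}^r$ is $t$-online-corruption-resiliently $\varepsilon$-testable using $\widetilde{O}(q(m,\frac\varepsilon2))$ queries on inputs of length $n=m\cdot r$.
   Context: For $r\in\mathbb{N}$ and a string $x$, $x^r$ is the concatenation of $r$ copies of $x$, and $\mathcal{P}^r=\{x^r:x\in\mathcal{P}\}$. A property is a set $\mathcal{P}=\bigcup_n\mathcal{P}_n$ where $\mathcal{P}_n$ consists of strings of length $n$ over $\Sigma$. The relative Hamming distance of $x,y\in\Sigma^n$ is $\delta_H(x,y)=\Pr_{i\sim[n]}[x_i\neq y_i]$; $x$ is $\varepsilon$-far from $\mathcal{P}$ if $\delta_H(x,y)\ge\varepsilon$ for all $y\in\mathcal{P}_n$. An $\varepsilon$-tester in the standard model, given $n$ and query access to $x\in\Sigma^n$, accepts with probability $\ge 2/3$ if $x\in\mathcal{P}$ and rejects with probability $\ge 2/3$ if $x$ is $\varepsilon$-far from $\mathcal{P}$. In the $t$-online-corruption model, the input is accessed through an adversarial oracle which initially answers query $i$ with $x_i$; after answering each query it may replace the values at up to $t$ indices by arbitrary symbols of $\Sigma$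 (used for future answers), with choices depending on the input, past queries and the algorithm's code but not on future coin tosses; a $t$-online-corruption-resilient $\varepsilon$-tester satisfies the tester guarantee (with respect to the original input) against every such oracle. $\widetilde{O}$ hides polylogarithmic factors. *)

theory Defs
  imports "HOL-Probability.Probability"
begin

text \<open>A deterministic adaptive query strategy: given the answers received so far
  (in order), it either asks the next query (Inl i, 0-based index) or halts with
  a verdict (Inr True = accept, Inr False = reject). A randomized algorithm is a
  probability distribution over such strategies (coins drawn up front).\<close>
type_synonym 'a strategy = "'a list \<Rightarrow> nat + bool"

definition rep_prop :: "nat \<Rightarrow> 'a list set \<Rightarrow> 'a list set" where
  "rep_prop r P = (\<lambda>x. concat (replicate r x)) ` P"

definition hdist :: "'a list \<Rightarrow> 'a list \<Rightarrow> real" where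
  "hdist x y = real (card {i. i < length x \<and> x ! i \<noteq> y ! i}) / real (length x)"

definition far :: "real \<Rightarrow> 'a list set \<Rightarrow> 'a list \<Rightarrow> bool" where
  "far \<epsilon> P x \<longleftrightarrow> (\<forall>y\<in>P. length y = length x \<longrightarrow> hdist x y \<ge> \<epsilon>)"

text \<open>Run of a strategy D with query budget k on inputs of length n, against an
  oracle orc: orc qs is the (current) string after the queries qs have been answered. Exceeding the budget or an
  out-of-range query yields None (neither accept nor reject).\<close>
fun run :: "nat \<Rightarrow> nat \<Rightarrow> 'a strategy \<Rightarrow> (nat list \<Rightarrow> 'a list) \<Rightarrow> nat list \<Rightarrow> 'a list
            \<Rightarrow> bool option" where
  "run 0 n D orc qs as = (case D as of Inr b \<Rightarrow> Some b | Inl _ \<Rightarrow> None)"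
| "run (Suc k) n D orc qs as = (case D as of Inr b \<Rightarrow> Some b
     | Inl i \<Rightarrow> (if n \<le> i then None else run k n D orc (qs @ [i]) (as @ [orc qs ! i])))"

text \<open>t-online-corruption oracles for input x: initially x; after each query the
  adversary may change at most t positions. Its choices depend only on the input
  and the past queries (and, since it is universally quantified after the algorithm,
  on the algorithm), not on the algorithm's coins.\<close>
definition oc_oracle :: "nat \<Rightarrow> 'a list \<Rightarrow> (nat list \<Rightarrow> 'a list) \<Rightarrow> bool" where
  "oc_oracle t x orc \<longleftrightarrow> orc [] = x \<and> (\<forall>qs. length (orc qs) = length x) \<and>
     (\<forall>qs i. card {j. j < length x \<and> orc (qs @ [i]) ! j \<noteq> orc qs ! j} \<le> t)"

definition std_tester :: "'a list set \<Rightarrow> real \<Rightarrow> nat \<Rightarrow> nat \<Rightarrow> 'a strategy pmf \<Rightarrow> bool" where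
  "std_tester P \<epsilon> n Q T \<longleftrightarrow> (\<forall>x. length x = n \<longrightarrow>
     (x \<in> P \<longrightarrow> measure_pmf.prob T {D. run Q n D (\<lambda>_. x) [] [] = Some True} \<ge> 2/3) \<and>
     (far \<epsilon> P x \<longrightarrow> measure_pmf.prob T {D. run Q n D (\<lambda>_. x) [] [] = Some False} \<ge> 2/3))"

definition oc_tester :: "'a list set \<Rightarrow> real \<Rightarrow> nat \<Rightarrow> nat \<Rightarrow> nat \<Rightarrow> 'a strategy pmf \<Rightarrow> bool" where
  "oc_tester P \<epsilon> t n Q T \<longleftrightarrow> (\<forall>x orc. length x = n \<longrightarrow> oc_oracle t x orc \<longrightarrow>
     (x \<in> P \<longrightarrow> measure_pmf.prob T {D. run Q n D orc [] [] = Some True} \<ge> 2/3) \<and>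
     (far \<epsilon> P x \<longrightarrow> measure_pmf.prob T {D. run Q n D orc [] [] = Some False} \<ge> 2/3))"

end

theory Submission
  imports Defs
begin

lemma prob_bind_le:
  assumes "\<And>x. x \<in> set_pmf M \<Longrightarrow> measure_pmf.prob (f x) A \<le> c"
  shows "measure_pmf.prob (bind_pmf M f) A \<le> c"
proof -
  obtain x where x: "x \<in> set_pmf M" using set_pmf_not_empty[of M] by blast
  have c0: "0 \<le> c" using assms[OF x] measure_nonneg order_trans by blast
  have "emeasure (bind_pmf M f) A = (\<integral>\<^sup>+x. emeasure (f x) A \<partial>M)" by simp
  also have "\<dots> \<le> (\<integral>\<^sup>+x. ennreal c \<partial>M)"
    apply (rule nn_integral_mono_AE)
    apply (rule AE_pmfI)
    using assms by (simp add: measure_pmf.emeasure_eq_measure ennreal_leI)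
  also have "\<dots> = ennreal c" by simp
  finally have "ennreal (measure_pmf.prob (bind_pmf M f) A) \<le> ennreal c"
    by (simp add: measure_pmf.emeasure_eq_measure)
  thus ?thesis using c0 by simp
qed

lemma prob_compl': "measure_pmf.prob M (- A) = 1 - measure_pmf.prob M A"
  using measure_pmf.prob_compl[of A M] by (simp add: Compl_eq_Diff_UNIV)

lemma prob_bind_ge:
  assumes "\<And>x. x \<in> set_pmf M \<Longrightarrow> measure_pmf.prob (f x) A \<ge> c"
  shows "measure_pmf.prob (bind_pmf M f) A \<ge> c"
proof -
  have "measure_pmf.prob (bind_pmf M f) (- A) \<le> 1 - c"
    apply (rule prob_bind_le)
    using assms by (simp add: prob_compl')
  thus ?thesis by (simp add: prob_compl')
qed

lemma prob_pair_le:
  assumes "\<And>a. a \<in> set_pmf M \<Longrightarrow> measure_pmf.prob N {b. (a,b) \<in> E} \<le> c"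
  shows "measure_pmf.prob (pair_pmf M N) E \<le> c"
  unfolding pair_pmf_def
  apply (rule prob_bind_le)
  using assms by (simp add: map_pmf_def[symmetric] vimage_def)

lemma prob_pair_le2:
  assumes "\<And>b. b \<in> set_pmf N \<Longrightarrow> measure_pmf.prob M {a. (a,b) \<in> E} \<le> c"
  shows "measure_pmf.prob (pair_pmf M N) E \<le> c"
proof -
  have "measure_pmf.prob (pair_pmf M N) E = measure_pmf.prob (pair_pmf N M) ((\<lambda>(x,y). (y,x)) -` E)"
    by (subst pair_commute_pmf) simp
  also have "\<dots> \<le> c" by (rule prob_pair_le) (use assms in auto)
  finally show ?thesis .
qed


fun crun :: "nat \<Rightarrow> nat \<Rightarrow> 'a strategy \<Rightarrow> 'a list \<Rightarrow> 'a list \<Rightarrow> bool option" where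
  "crun 0 n D y as = (case D as of Inr b \<Rightarrow> Some b | Inl _ \<Rightarrow> None)"
| "crun (Suc k) n D y as = (case D as of Inr b \<Rightarrow> Some b
     | Inl i \<Rightarrow> (if n \<le> i then None else crun k n D y (as @ [y ! i])))"

fun cql :: "nat \<Rightarrow> nat \<Rightarrow> 'a strategy \<Rightarrow> 'a list \<Rightarrow> 'a list \<Rightarrow> nat list" where
  "cql 0 n D y as = []"
| "cql (Suc k) n D y as = (case D as of Inr b \<Rightarrow> []
     | Inl i \<Rightarrow> (if n \<le> i then [] else i # cql k n D y (as @ [y ! i])))"

lemma run_const: "run k n D (\<lambda>_. y) qs as = crun k n D y as"
  by (induction k arbitrary: qs as) (auto split: sum.splits)

lemma crun_shift:
  assumes "\<And>more. D1 (pre @ more) = D2 (pre' @ more)"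
  shows "crun k n D1 y (pre @ as) = crun k n D2 y (pre' @ as)"
  using assms
proof (induction k arbitrary: as)
  case 0 then show ?case by (simp split: sum.splits)
next
  case (Suc k)
  show ?case using Suc.prems Suc.IH[of "as @ [y ! _]"] by (simp split: sum.splits)
qed

lemma cql_shift:
  assumes "\<And>more. D1 (pre @ more) = D2 (pre' @ more)"
  shows "cql k n D1 y (pre @ as) = cql k n D2 y (pre' @ as)"
  using assms
proof (induction k arbitrary: as)
  case 0 then show ?case by simp
next
  case (Suc k)
  show ?case using Suc.prems Suc.IH[of "as @ [y ! _]"] by (simp split: sum.splits)
qed

lemma crun_cong:
  assumes "\<And>more. D1 (as @ more) = D2 (as @ more)"
  shows "crun k n D1 y as = crun k n D2 y as"
proof -
  have "crun k n D1 y (as @ []) = crun k n D2 y (as @ [])" by (rule crun_shift) (rule assms)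
  thus ?thesis by simp
qed

lemma cql_cong:
  assumes "\<And>more. D1 (as @ more) = D2 (as @ more)"
  shows "cql k n D1 y as = cql k n D2 y as"
proof -
  have "cql k n D1 y (as @ []) = cql k n D2 y (as @ [])" by (rule cql_shift) (rule assms)
  thus ?thesis by simp
qed

lemma crun_mono:
  "crun k n D y as = Some b \<Longrightarrow> k \<le> k' \<Longrightarrow> crun k' n D y as = Some b"
proof (induction k arbitrary: k' as)
  case 0 then show ?case by (cases k') (auto split: sum.splits)
next
  case (Suc k)
  then obtain k'' where k': "k' = Suc k''" by (cases k') auto
  show ?case using Suc by (auto simp: k' split: sum.splits if_splits)
qed

lemma cql_length: "length (cql k n D y as) \<le> k"
  by (induction k arbitrary: as) (auto split: sum.splits)

lemma cql_bound: "j \<in> set (cql k n D y as) \<Longrightarrow> j < n"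
  by (induction k arbitrary: as) (auto split: sum.splits if_splits)

lemma run_eq_clean:
  assumes "\<forall>l < length (cql k n D x as). orc (qs @ take l (cql k n D x as)) ! (cql k n D x as ! l)
              = x ! (cql k n D x as ! l)"
  shows "run k n D orc qs as = crun k n D x as"
  using assms
proof (induction k arbitrary: qs as)
  case 0 then show ?case by (simp split: sum.splits)
next
  case (Suc k)
  show ?case
  proof (cases "D as")
    case (Inl i)
    show ?thesis
    proof (cases "n \<le> i")
      case False
      let ?L = "cql k n D x (as @ [x ! i])"
      have L: "cql (Suc k) n D x as = i # ?L" using Inl False by simp
      have h0: "orc qs ! i = x ! i" using Suc.prems[rule_format, of 0] L by simp
      have h1: "\<forall>l<length ?L. orc ((qs @ [i]) @ take l ?L) ! (?L ! l) = x ! (?L ! l)"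
      proof (intro allI impI)
        fix l assume "l < length ?L"
        thus "orc ((qs @ [i]) @ take l ?L) ! (?L ! l) = x ! (?L ! l)"
          using Suc.prems[rule_format, of "Suc l"] L by simp
      qed
      show ?thesis using Inl False h0 Suc.IH[OF h1] by simp
    qed (use Inl in simp)
  qed simp
qed


primrec seqf :: "nat \<Rightarrow> nat \<Rightarrow> 'a strategy \<Rightarrow> (bool \<Rightarrow> 'a strategy) \<Rightarrow> 'a list \<Rightarrow> 'a strategy" where
  "seqf n f D K h [] = (case D h of Inr b \<Rightarrow> K b [] | Inl i \<Rightarrow> if f = 0 \<or> n \<le> i then K False [] else Inl i)"
| "seqf n f D K h (a # as) = (case D h of Inr b \<Rightarrow> K b (a # as)
     | Inl i \<Rightarrow> if f = 0 \<or> n \<le> i then K False (a # as) else seqf n (f - 1) D K (h @ [a]) as)"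

definition res :: "nat \<Rightarrow> nat \<Rightarrow> 'a strategy \<Rightarrow> 'a list \<Rightarrow> 'a list \<Rightarrow> bool" where
  "res f n D y h = (case crun f n D y h of Some b \<Rightarrow> b | None \<Rightarrow> False)"

lemma seqf_Inr: "D h = Inr b \<Longrightarrow> seqf n f D K h as = K b as"
  by (cases as) auto

lemma seqf_fail: "D h = Inl i \<Longrightarrow> f = 0 \<or> n \<le> i \<Longrightarrow> seqf n f D K h as = K False as"
  by (cases as) auto

lemma seqf_step: "D h = Inl i \<Longrightarrow> \<not> n \<le> i \<Longrightarrow>
   seqf n (Suc f) D K h ([a] @ more) = seqf n f D K (h @ [a]) more"
  by simp

lemma crun_shift0:
  assumes "\<And>more. D1 (pre @ more) = D2 more"
  shows "crun k n D1 y pre = crun k n D2 y []"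
  using crun_shift[of D1 pre D2 "[]" k n y "[]"] assms
  by simp

lemma cql_shift0:
  assumes "\<And>more. D1 (pre @ more) = D2 more"
  shows "cql k n D1 y pre = cql k n D2 y []"
  using cql_shift[of D1 pre D2 "[]" k n y "[]"] assms
  by simp

lemma crun_ext: "(\<And>as. D1 as = D2 as) \<Longrightarrow> crun k n D1 y as = crun k n D2 y as"
  by (rule crun_cong) simp

lemma cql_ext: "(\<And>as. D1 as = D2 as) \<Longrightarrow> cql k n D1 y as = cql k n D2 y as"
  by (rule cql_cong) simp

lemma seqf_run:
  assumes "crun k n (K (res f n D y h)) y [] = Some v"
  shows "crun (f + k) n (seqf n f D K h) y [] = Some v"
  using assms
proof (induction f arbitrary: h)
  case 0
  show ?case
  proof (cases "D h")
    case (Inl i)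
    have "res 0 n D y h = False" using Inl by (simp add: res_def)
    moreover have "crun (0 + k) n (seqf n 0 D K h) y [] = crun k n (K False) y []"
      by (simp add: crun_ext[OF seqf_fail[of D h i, OF Inl]])
    ultimately show ?thesis using 0 by simp
  next
    case (Inr b)
    have "res 0 n D y h = b" using Inr by (simp add: res_def)
    moreover have "crun (0 + k) n (seqf n 0 D K h) y [] = crun k n (K b) y []"
      by (simp add: crun_ext[OF seqf_Inr[of D h b, OF Inr]])
    ultimately show ?thesis using 0 by simp
  qed
next
  case (Suc f)
  show ?case
  proof (cases "D h")
    case (Inr b)
    have "res (Suc f) n D y h = b" using Inr by (simp add: res_def)
    moreover have "crun (Suc f + k) n (seqf n (Suc f) D K h) y [] = crun (Suc f + k) n (K b) y []"
      by (simp add: crun_ext[OF seqf_Inr[of D h b, OF Inr]])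
    ultimately show ?thesis using Suc.prems crun_mono[of k n "K b" y "[]" v "Suc f + k"] by simp
  next
    case (Inl i)
    show ?thesis
    proof (cases "n \<le> i")
      case True
      have "res (Suc f) n D y h = False" using Inl True by (simp add: res_def)
      moreover have "crun (Suc f + k) n (seqf n (Suc f) D K h) y [] = crun (Suc f + k) n (K False) y []"
        by (rule crun_ext, rule seqf_fail[of D h i, OF Inl]) (use True in simp)
      ultimately show ?thesis using Suc.prems crun_mono[of k n "K False" y "[]" v "Suc f + k"] by simp
    next
      case False
      have r: "res (Suc f) n D y h = res f n D y (h @ [y ! i])" using Inl False by (simp add: res_def)
      have "crun (Suc f + k) n (seqf n (Suc f) D K h) y [] =
            crun (f + k) n (seqf n (Suc f) D K h) y [y ! i]" using Inl False by simp
      also have "\<dots> = crun (f + k) n (seqf n f D K (h @ [y ! i])) y []"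
        by (rule crun_shift0) (use Inl False in simp)
      also have "\<dots> = Some v" using Suc.IH Suc.prems r by simp
      finally show ?thesis .
    qed
  qed
qed

lemma seqf_cql:
  "cql (f + k) n (seqf n f D K h) y [] =
     cql f n D y h @ cql (f + k - length (cql f n D y h)) n (K (res f n D y h)) y []"
proof (induction f arbitrary: h)
  case 0
  show ?case
  proof (cases "D h")
    case (Inl i)
    have "res 0 n D y h = False" using Inl by (simp add: res_def)
    moreover have "cql (0 + k) n (seqf n 0 D K h) y [] = cql k n (K False) y []"
      by (simp add: cql_ext[OF seqf_fail[of D h i, OF Inl]])
    ultimately show ?thesis by simp
  next
    case (Inr b)
    have "res 0 n D y h = b" using Inr by (simp add: res_def)
    moreover have "cql (0 + k) n (seqf n 0 D K h) y [] = cql k n (K b) y []"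
      by (simp add: cql_ext[OF seqf_Inr[of D h b, OF Inr]])
    ultimately show ?thesis by simp
  qed
next
  case (Suc f)
  show ?case
  proof (cases "D h")
    case (Inr b)
    have "res (Suc f) n D y h = b" using Inr by (simp add: res_def)
    moreover have "cql (Suc f + k) n (seqf n (Suc f) D K h) y [] = cql (Suc f + k) n (K b) y []"
      by (simp add: cql_ext[OF seqf_Inr[of D h b, OF Inr]])
    ultimately show ?thesis using Inr by simp
  next
    case (Inl i)
    show ?thesis
    proof (cases "n \<le> i")
      case True
      have "res (Suc f) n D y h = False" using Inl True by (simp add: res_def)
      moreover have "cql (Suc f + k) n (seqf n (Suc f) D K h) y [] = cql (Suc f + k) n (K False) y []"
        by (rule cql_ext, rule seqf_fail[of D h i, OF Inl]) (use True in simp)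
      ultimately show ?thesis using Inl True by simp
    next
      case False
      have r: "res (Suc f) n D y h = res f n D y (h @ [y ! i])" using Inl False by (simp add: res_def)
      have c: "cql (Suc f) n D y h = i # cql f n D y (h @ [y ! i])" using Inl False by simp
      have "cql (Suc f + k) n (seqf n (Suc f) D K h) y [] =
            i # cql (f + k) n (seqf n (Suc f) D K h) y [y ! i]" using Inl False by simp
      also have "cql (f + k) n (seqf n (Suc f) D K h) y [y ! i] = cql (f + k) n (seqf n f D K (h @ [y ! i])) y []"
        by (rule cql_shift0) (use Inl False in simp)
      finally show ?thesis using Suc.IH r c by simp
    qed
  qed
qed

definition maj :: "bool \<Rightarrow> bool \<Rightarrow> bool \<Rightarrow> bool" where
  "maj a b c \<longleftrightarrow> (a \<and> b) \<or> (a \<and> c) \<or> (b \<and> c)"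

definition maj3 :: "nat \<Rightarrow> nat \<Rightarrow> 'a strategy \<Rightarrow> 'a strategy \<Rightarrow> 'a strategy \<Rightarrow> 'a strategy" where
  "maj3 m q D1 D2 D3 = seqf m q D1 (\<lambda>b1. seqf m q D2 (\<lambda>b2. seqf m q D3 (\<lambda>b3 _. Inr (maj b1 b2 b3)) []) []) []"

lemma maj3_run:
  "crun (3 * q) m (maj3 m q D1 D2 D3) y [] = Some (maj (res q m D1 y []) (res q m D2 y []) (res q m D3 y []))"
proof -
  have e: "3 * q = q + (q + (q + 0))" by simp
  show ?thesis unfolding e maj3_def
    apply (rule seqf_run)
    apply (rule seqf_run)
    apply (rule seqf_run)
    apply simp
    done
qed


fun sim :: "nat \<Rightarrow> nat \<Rightarrow> 'a strategy \<Rightarrow> 'a list \<Rightarrow> nat list \<Rightarrow> 'a list \<Rightarrow> nat + bool" where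
  "sim m 0 D h ql as = (case D h of Inr b \<Rightarrow> Inr b | Inl i \<Rightarrow> Inl m)"
| "sim m (Suc f) D h ql as = (case D h of Inr b \<Rightarrow> Inr b | Inl i \<Rightarrow>
      if m \<le> i then Inl m
      else if i \<in> set ql then sim m f D (h @ [the (map_of (zip ql as) i)]) ql as
      else if length ql < length as then sim m f D (h @ [as ! length ql]) (ql @ [i]) as
      else Inl i)"

lemma zip_app_eq: "length xs = length as \<Longrightarrow> zip xs (as @ more) = zip xs as"
  by (induction xs arbitrary: as) (auto simp: Suc_length_conv)

lemma sim_cached:
  assumes "D h = Inl i" "i < m" "i \<in> set ql" "length as = length ql"
  shows "sim m (Suc f) D h ql (as @ more) = sim m f D (h @ [the (map_of (zip ql as) i)]) ql (as @ more)"
  using assms by (simp add: zip_app_eq)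

lemma sim_new:
  assumes "D h = Inl i" "i < m" "i \<notin> set ql" "length as = length ql"
  shows "sim m (Suc f) D h ql ((as @ [a]) @ more) = sim m f D (h @ [a]) (ql @ [i]) ((as @ [a]) @ more)"
  using assms by (simp add: nth_append)

lemma sim_run:
  assumes "length y = m" "f \<le> k"
  shows "crun k m (sim m f D h ql) y (map ((!) y) ql) = crun f m D y h"
  using assms(2)
proof (induction f arbitrary: h ql k)
  case 0
  show ?case by (cases k) (auto split: sum.splits)
next
  case (Suc f)
  then obtain k' where k: "k = Suc k'" by (cases k) auto
  show ?case
  proof (cases "D h")
    case (Inr b) then show ?thesis by (simp add: k)
  next
    case (Inl i)
    show ?thesis
    proof (cases "m \<le> i")
      case True then show ?thesis using Inl by (simp add: k)
    next
      case False
      show ?thesis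
      proof (cases "i \<in> set ql")
        case True
        have mo: "map_of (zip ql (map ((!) y) ql)) i = Some (y ! i)"
          using True by (simp add: map_of_zip_map)
        have "crun k m (sim m (Suc f) D h ql) y (map ((!) y) ql) =
              crun k m (sim m f D (h @ [y ! i]) ql) y (map ((!) y) ql)"
          by (rule crun_cong) (use sim_cached[of D h i m ql "map ((!) y) ql" f] Inl True False mo in simp)
        also have "\<dots> = crun f m D y (h @ [y ! i])" using Suc by simp
        finally show ?thesis using Inl False by (simp del: sim.simps)
      next
        case nq: False
        have "crun k m (sim m (Suc f) D h ql) y (map ((!) y) ql) =
              crun k' m (sim m (Suc f) D h ql) y (map ((!) y) ql @ [y ! i])"
          using Inl False nq by (simp add: k)
        also have "\<dots> = crun k' m (sim m f D (h @ [y ! i]) (ql @ [i])) y (map ((!) y) ql @ [y ! i])"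
          by (rule crun_cong) (use sim_new[of D h i m ql "map ((!) y) ql" f "y ! i"] Inl nq False in simp)
        also have "\<dots> = crun f m D y (h @ [y ! i])"
          using Suc.IH[of k' "h @ [y ! i]" "ql @ [i]"] Suc.prems k by simp
        finally show ?thesis using Inl False by (simp del: sim.simps)
      qed
    qed
  qed
qed

lemma sim_cql:
  assumes "length as = length ql" "\<And>j. j < m \<Longrightarrow> j \<notin> set ql \<Longrightarrow> y ! j = y' ! j"
  shows "cql k m (sim m f D h ql) y as = cql k m (sim m f D h ql) y' as \<and>
         set (cql k m (sim m f D h ql) y as) \<inter> set ql = {}"
  using assms
proof (induction f arbitrary: h ql as k)
  case 0
  show ?case by (cases k) (auto split: sum.splits)
next
  case (Suc f)
  show ?case
  proof (cases "D h")
    case (Inr b) then show ?thesis by (cases k) simp_all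
  next
    case (Inl i)
    show ?thesis
    proof (cases "m \<le> i")
      case True then show ?thesis using Inl by (cases k) simp_all
    next
      case False
      show ?thesis
      proof (cases "i \<in> set ql")
        case True
        have e: "\<And>z. cql k m (sim m (Suc f) D h ql) z as =
              cql k m (sim m f D (h @ [the (map_of (zip ql as) i)]) ql) z as"
          by (rule cql_cong) (use sim_cached[of D h i m ql as f] Inl True Suc.prems(1) False in simp)
        show ?thesis unfolding e by (rule Suc.IH) (use Suc.prems in auto)
      next
        case nq: False
        show ?thesis
        proof (cases k)
          case 0 then show ?thesis by simp
        next
          case (Suc k')
          have e: "\<And>z. cql k m (sim m (Suc f) D h ql) z as =
                i # cql k' m (sim m f D (h @ [z ! i]) (ql @ [i])) z (as @ [z ! i])"
          proof -
            fix z :: "'a list"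
            have "cql k m (sim m (Suc f) D h ql) z as =
                i # cql k' m (sim m (Suc f) D h ql) z (as @ [z ! i])"
              using Inl False nq Suc.prems(1) by (simp add: \<open>k = Suc k'\<close>)
            also have "cql k' m (sim m (Suc f) D h ql) z (as @ [z ! i]) =
                       cql k' m (sim m f D (h @ [z ! i]) (ql @ [i])) z (as @ [z ! i])"
              by (rule cql_cong) (use sim_new[of D h i m ql as f "z ! i"] Inl nq Suc.prems(1) False in simp)
            finally show "cql k m (sim m (Suc f) D h ql) z as =
                i # cql k' m (sim m f D (h @ [z ! i]) (ql @ [i])) z (as @ [z ! i])" .
          qed
          have yi: "y ! i = y' ! i" using Suc.prems(2) False nq by simp
          have IH: "cql k' m (sim m f D (h @ [y ! i]) (ql @ [i])) y (as @ [y ! i]) =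
                cql k' m (sim m f D (h @ [y ! i]) (ql @ [i])) y' (as @ [y ! i]) \<and>
                set (cql k' m (sim m f D (h @ [y ! i]) (ql @ [i])) y (as @ [y ! i])) \<inter> set (ql @ [i]) = {}"
            by (rule Suc.IH) (use Suc.prems in auto)
          show ?thesis unfolding e using IH yi nq by auto
        qed
      qed
    qed
  qed
qed

lemma sim_cql_bound: "j \<in> set (cql k m (sim m f D h ql) y as) \<Longrightarrow> j < m"
  by (rule cql_bound)

definition mapq :: "nat \<Rightarrow> nat \<Rightarrow> (nat \<Rightarrow> nat) \<Rightarrow> 'a strategy \<Rightarrow> 'a strategy" where
  "mapq m n \<beta> S as = (case S as of Inr b \<Rightarrow> Inr b | Inl v \<Rightarrow> Inl (if v < m then \<beta> v * m + v else n))"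

definition zv :: "nat \<Rightarrow> 'a list \<Rightarrow> (nat \<Rightarrow> nat) \<Rightarrow> 'a list" where
  "zv m x \<beta> = map (\<lambda>v. x ! (\<beta> v * m + v)) [0..<m]"

lemma mapq_run:
  assumes "\<And>v. v < m \<Longrightarrow> \<beta> v * m + v < n"
  shows "crun k n (mapq m n \<beta> S) x as = crun k m S (zv m x \<beta>) as \<and>
         cql k n (mapq m n \<beta> S) x as = map (\<lambda>v. \<beta> v * m + v) (cql k m S (zv m x \<beta>) as)"
proof (induction k arbitrary: as)
  case 0 then show ?case by (auto simp: mapq_def split: sum.splits)
next
  case (Suc k)
  show ?case
  proof (cases "S as")
    case (Inl v)
    show ?thesis
    proof (cases "v < m")
      case True
      have "zv m x \<beta> ! v = x ! (\<beta> v * m + v)" using True by (simp add: zv_def)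
      then show ?thesis using Inl True Suc.IH[of "as @ [x ! (\<beta> v * m + v)]"] assms[OF True]
        by (simp add: mapq_def)
    qed (use Inl in \<open>simp add: mapq_def\<close>)
  qed (simp add: mapq_def)
qed


definition spread :: "nat \<Rightarrow> nat list pmf \<Rightarrow> bool" where
  "spread r \<mu> \<longleftrightarrow> (\<forall>l F N. (\<forall>ps. finite (F ps) \<and> card (F ps) \<le> N) \<longrightarrow>
     measure_pmf.prob \<mu> {L. l < length L \<and> L ! l \<in> F (take l L)} \<le> real N / real r)"

lemma spreadI:
  assumes "\<And>l F N. (\<And>ps. finite (F ps) \<and> card (F ps) \<le> N) \<Longrightarrow>
     measure_pmf.prob \<mu> {L. l < length L \<and> L ! l \<in> F (take l L)} \<le> real N / real r"
  shows "spread r \<mu>"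
  using assms unfolding spread_def by blast

lemma spreadD:
  assumes "spread r \<mu>" "\<And>ps. finite (F ps) \<and> card (F ps) \<le> N"
  shows "measure_pmf.prob \<mu> {L. l < length L \<and> L ! l \<in> F (take l L)} \<le> real N / real r"
  using assms unfolding spread_def by blast

lemma spread_bind:
  assumes "\<And>x. x \<in> set_pmf M \<Longrightarrow> spread r (f x)"
  shows "spread r (bind_pmf M f)"
  by (rule spreadI, rule prob_bind_le) (use assms spreadD in blast)

lemma spread_nil: "spread r (return_pmf [])"
  by (rule spreadI) simp

lemma spread_append:
  assumes len: "\<And>a. length (pre a) = ll"
    and s1: "spread r (map_pmf pre M1)"
    and s2: "\<And>a. a \<in> set_pmf M1 \<Longrightarrow> spread r (map_pmf (rest a) M2)"
  shows "spread r (map_pmf (\<lambda>(a,b). pre a @ rest a b) (pair_pmf M1 M2))"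
proof (rule spreadI)
  fix l N :: nat and F :: "nat list \<Rightarrow> nat set" assume F: "\<And>ps. finite (F ps) \<and> card (F ps) \<le> N"
  let ?E = "{L. l < length L \<and> L ! l \<in> F (take l L)}"
  have "measure_pmf.prob (map_pmf (\<lambda>(a,b). pre a @ rest a b) (pair_pmf M1 M2)) ?E =
        measure_pmf.prob (pair_pmf M1 M2) {(a,b). pre a @ rest a b \<in> ?E}"
    by (simp add: vimage_def case_prod_unfold)
  also have "\<dots> \<le> real N / real r"
  proof (cases "l < ll")
    case True
    have "{(a,b). pre a @ rest a b \<in> ?E} = {ab. fst ab \<in> pre -` ?E}"
      using True len by (auto simp: nth_append)
    hence "measure_pmf.prob (pair_pmf M1 M2) {(a,b). pre a @ rest a b \<in> ?E} =
           measure_pmf.prob (map_pmf fst (pair_pmf M1 M2)) (pre -` ?E)"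
      by (simp add: vimage_def)
    also have "\<dots> = measure_pmf.prob (map_pmf pre M1) ?E"
      by (simp add: map_fst_pair_pmf)
    also have "\<dots> \<le> real N / real r" by (rule spreadD[OF s1 F])
    finally show ?thesis .
  next
    case False
    show ?thesis
    proof (rule prob_pair_le)
      fix a assume a: "a \<in> set_pmf M1"
      have "{b. (a, b) \<in> {(a,b). pre a @ rest a b \<in> ?E}} =
            rest a -` {L. (l - ll) < length L \<and> L ! (l - ll) \<in> (\<lambda>ps. F (pre a @ ps)) (take (l - ll) L)}"
        using False len[of a] by (auto simp: nth_append)
      hence "measure_pmf.prob M2 {b. (a, b) \<in> {(a,b). pre a @ rest a b \<in> ?E}} =
             measure_pmf.prob (map_pmf (rest a) M2)
               {L. (l - ll) < length L \<and> L ! (l - ll) \<in> (\<lambda>ps. F (pre a @ ps)) (take (l - ll) L)}"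
        by simp
      also have "\<dots> \<le> real N / real r"
        by (rule spreadD[OF s2[OF a]]) (use F in simp)
      finally show "measure_pmf.prob M2 {b. (a, b) \<in> {(a,b). pre a @ rest a b \<in> ?E}} \<le> real N / real r" .
    qed
  qed
  finally show "measure_pmf.prob (map_pmf (\<lambda>(a,b). pre a @ rest a b) (pair_pmf M1 M2)) ?E \<le> real N / real r" .
qed

abbreviation U :: "nat \<Rightarrow> nat pmf" where "U r \<equiv> pmf_of_set {..<r}"

lemma unif_shift_le:
  assumes "finite S" "0 < r" "0 < m"
  shows "measure_pmf.prob (U r) {c. c * m + i \<in> S} \<le> real (card S) / real r"
proof -
  have "measure_pmf.prob (U r) {c. c * m + i \<in> S} = card ({..<r} \<inter> {c. c * m + i \<in> S}) / card {..<r}"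
    using assms by (subst measure_pmf_of_set) auto
  also have "card ({..<r} \<inter> {c. c * m + i \<in> S}) \<le> card S"
  proof (rule card_inj_on_le[where f="\<lambda>c. c * m + i"])
    show "inj_on (\<lambda>c. c * m + i) ({..<r} \<inter> {c. c * m + i \<in> S})"
      using assms(3) by (auto simp: inj_on_def)
  qed (use assms in auto)
  hence "real (card ({..<r} \<inter> {c. c * m + i \<in> S})) / card {..<r} \<le> real (card S) / real r"
    using assms by (simp add: divide_right_mono)
  finally show ?thesis .
qed

lemma pos_lt: "c < r \<Longrightarrow> v < m \<Longrightarrow> c * m + v < m * (r::nat)"
proof -
  assume "c < r" "v < m"
  hence "c * m + v < c * m + m" by simp
  also have "\<dots> = (c + 1) * m" by simp
  also have "\<dots> \<le> r * m" using \<open>c < r\<close> by (intro mult_right_mono) auto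
  finally show ?thesis by (simp add: mult.commute)
qed

lemma setU: "0 < r \<Longrightarrow> set_pmf (U r) = {..<r}"
  by (subst set_pmf_of_set) auto

lemma PiU_support:
  assumes "\<beta> \<in> set_pmf (Pi_pmf A 0 (\<lambda>_. U r))" "finite A" "0 < r"
  shows "\<beta> v < r"
  using set_Pi_pmf_subset'[OF assms(2), of 0 "\<lambda>_. U r"] assms
  by (cases "v \<in> A") (auto simp: PiE_dflt_def setU)


lemma sim_cql_new:
  assumes "D h = Inl i" "i < m" "i \<notin> set ql" "length as = length ql"
  shows "cql (Suc k') m (sim m (Suc f) D h ql) z as =
         i # cql k' m (sim m f D (h @ [z ! i]) (ql @ [i])) z (as @ [z ! i])"
proof -
  have "cql (Suc k') m (sim m (Suc f) D h ql) z as =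
      i # cql k' m (sim m (Suc f) D h ql) z (as @ [z ! i])"
    using assms by simp
  also have "cql k' m (sim m (Suc f) D h ql) z (as @ [z ! i]) =
             cql k' m (sim m f D (h @ [z ! i]) (ql @ [i])) z (as @ [z ! i])"
    by (rule cql_cong) (use sim_new[of D h i m ql as f "z ! i"] assms in simp)
  finally show ?thesis .
qed

lemma sim_cql_cached:
  assumes "D h = Inl i" "i < m" "i \<in> set ql" "length as = length ql"
  shows "cql k m (sim m (Suc f) D h ql) z as = cql k m (sim m f D (h @ [the (map_of (zip ql as) i)]) ql) z as"
  by (rule cql_cong) (use sim_cached[of D h i m ql as f] assms in simp)

lemma spread_sim:
  assumes r: "0 < r" and m: "0 < m"
  shows "length as = length ql \<Longrightarrow>
    spread r (map_pmf (\<lambda>\<beta>. map (\<lambda>v. \<beta> v * m + v) (cql k m (sim m f D h ql) (zv m x \<beta>) as))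
                (Pi_pmf ({..<m} - set ql) 0 (\<lambda>_. U r)))"
proof (induction f arbitrary: h ql as k)
  case 0
  have "\<And>\<beta>. cql k m (sim m 0 D h ql) (zv m x \<beta>) as = []"
    by (cases k) (auto split: sum.splits)
  then show ?case by (simp del: sim.simps add: map_pmf_const spread_nil)
next
  case (Suc f)
  show ?case
  proof (cases "D h")
    case (Inr b)
    have "\<And>\<beta>. cql k m (sim m (Suc f) D h ql) (zv m x \<beta>) as = []"
      using Inr by (cases k) auto
    then show ?thesis by (simp del: sim.simps add: map_pmf_const spread_nil)
  next
    case (Inl i)
    show ?thesis
    proof (cases "m \<le> i")
      case True
      have "\<And>\<beta>. cql k m (sim m (Suc f) D h ql) (zv m x \<beta>) as = []"
        using Inl True by (cases k) auto
      then show ?thesis by (simp del: sim.simps add: map_pmf_const spread_nil)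
    next
      case False
      hence im: "i < m" by simp
      show ?thesis
      proof (cases "i \<in> set ql")
        case True
        show ?thesis
          unfolding sim_cql_cached[of D h i m ql as k f, OF Inl im True Suc.prems]
          by (rule Suc.IH) (use Suc.prems in auto)
      next
        case nq: False
        show ?thesis
        proof (cases k)
          case 0
          then show ?thesis by (simp del: sim.simps add: map_pmf_const spread_nil)
        next
          case (Suc k')
          define A' where "A' = {..<m} - set (ql @ [i])"
          have A: "{..<m} - set ql = insert i A'" "i \<notin> A'" "finite A'"
            using im nq by (auto simp: A'_def)
          define L' where "L' c \<beta>' = map (\<lambda>v. \<beta>' v * m + v)
              (cql k' m (sim m f D (h @ [x ! (c * m + i)]) (ql @ [i])) (zv m x \<beta>') (as @ [x ! (c * m + i)]))"
            for c \<beta>'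
          have key: "map (\<lambda>v. (\<beta>'(i := c)) v * m + v) (cql k m (sim m (Suc f) D h ql) (zv m x (\<beta>'(i := c))) as)
                = [c * m + i] @ L' c \<beta>'" for c \<beta>'
          proof -
            let ?z = "zv m x (\<beta>'(i := c))"
            have zi: "?z ! i = x ! (c * m + i)" using im by (simp add: zv_def)
            have sc: "cql k' m (sim m f D (h @ [x ! (c * m + i)]) (ql @ [i])) ?z (as @ [x ! (c * m + i)]) =
                  cql k' m (sim m f D (h @ [x ! (c * m + i)]) (ql @ [i])) (zv m x \<beta>') (as @ [x ! (c * m + i)]) \<and>
                  set (cql k' m (sim m f D (h @ [x ! (c * m + i)]) (ql @ [i])) ?z (as @ [x ! (c * m + i)])) \<inter> set (ql @ [i]) = {}"
              by (rule sim_cql) (use Suc.prems in \<open>auto simp: zv_def\<close>)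
            show ?thesis
              unfolding \<open>k = Suc k'\<close> sim_cql_new[of D h i m ql as k' f, OF Inl im nq Suc.prems] zi L'_def
              using sc by auto
          qed
          have "map_pmf (\<lambda>\<beta>. map (\<lambda>v. \<beta> v * m + v) (cql k m (sim m (Suc f) D h ql) (zv m x \<beta>) as))
                  (Pi_pmf ({..<m} - set ql) 0 (\<lambda>_. U r)) =
                map_pmf (\<lambda>(c, \<beta>'). [c * m + i] @ L' c \<beta>') (pair_pmf (U r) (Pi_pmf A' 0 (\<lambda>_. U r)))"
            unfolding A(1) Pi_pmf_insert[OF A(3,2)] pmf.map_comp
            by (rule pmf.map_cong) (auto simp del: fun_upd_apply simp add: key)
          moreover have "spread r (map_pmf (\<lambda>(c, \<beta>'). [c * m + i] @ L' c \<beta>') (pair_pmf (U r) (Pi_pmf A' 0 (\<lambda>_. U r))))"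
          proof (rule spread_append[where ll=1])
            show "spread r (map_pmf (\<lambda>c. [c * m + i]) (U r))"
            proof (rule spreadI)
              fix l N :: nat and F :: "nat list \<Rightarrow> nat set"
              assume F: "\<And>ps. finite (F ps) \<and> card (F ps) \<le> N"
              show "measure_pmf.prob (map_pmf (\<lambda>c. [c * m + i]) (U r)) {L. l < length L \<and> L ! l \<in> F (take l L)} \<le> real N / real r"
              proof (cases l)
                case 0
                have "measure_pmf.prob (map_pmf (\<lambda>c. [c * m + i]) (U r)) {L. l < length L \<and> L ! l \<in> F (take l L)}
                     = measure_pmf.prob (U r) {c. c * m + i \<in> F []}" using 0 by (simp add: vimage_def)
                also have "\<dots> \<le> real (card (F [])) / real r" by (rule unif_shift_le) (use F r m in auto)
                also have "\<dots> \<le> real N / real r" using F[of "[]"] by (simp add: divide_right_mono)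
                finally show ?thesis .
              qed (simp add: vimage_def)
            qed
          next
            fix c assume "c \<in> set_pmf (U r)"
            show "spread r (map_pmf (L' c) (Pi_pmf A' 0 (\<lambda>_. U r)))"
              unfolding L'_def A'_def by (rule Suc.IH) (use Suc.prems in simp)
          qed simp
          ultimately show ?thesis by (simp only:)
        qed
      qed
    qed
  qed
qed


lemma oc_diff_card:
  assumes "oc_oracle t x orc"
  shows "card {j. j < length x \<and> orc ps ! j \<noteq> x ! j} \<le> length ps * t"
proof (induction ps rule: rev_induct)
  case Nil
  then show ?case using assms by (simp add: oc_oracle_def)
next
  case (snoc i ps)
  let ?A = "{j. j < length x \<and> orc ps ! j \<noteq> x ! j}"
  let ?B = "{j. j < length x \<and> orc (ps @ [i]) ! j \<noteq> orc ps ! j}"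
  have "{j. j < length x \<and> orc (ps @ [i]) ! j \<noteq> x ! j} \<subseteq> ?A \<union> ?B" by auto
  hence "card {j. j < length x \<and> orc (ps @ [i]) ! j \<noteq> x ! j} \<le> card (?A \<union> ?B)"
    by (intro card_mono) auto
  also have "\<dots> \<le> card ?A + card ?B" by (rule card_Un_le)
  also have "card ?B \<le> t" using assms by (simp add: oc_oracle_def)
  finally show ?case using snoc by simp
qed

lemma bad_bound:
  fixes T :: "'a strategy pmf"
  assumes oc: "oc_oracle t x orc" and lx: "length x = n" and r: "0 < r"
    and sp: "spread r (map_pmf (\<lambda>S. cql K n S x []) T)"
  shows "measure_pmf.prob T {S. run K n S orc [] [] = Some v} \<ge>
         measure_pmf.prob T {S. crun K n S x [] = Some v} - real (K * K * t) / real r"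
proof -
  define B where "B = {S. \<exists>l < length (cql K n S x []). orc (take l (cql K n S x [])) ! (cql K n S x [] ! l)
                       \<noteq> x ! (cql K n S x [] ! l)}"
  define F where "F l ps = (if length ps = l then {j. j < n \<and> orc ps ! j \<noteq> x ! j} else {})" for l and ps :: "nat list"
  define E where "E l = {S. l < length (cql K n S x []) \<and> cql K n S x [] ! l \<in> F l (take l (cql K n S x []))}" for l
  have "{S. crun K n S x [] = Some v} \<subseteq> {S. run K n S orc [] [] = Some v} \<union> B"
  proof
    fix S assume "S \<in> {S. crun K n S x [] = Some v}"
    moreover have "S \<notin> B \<Longrightarrow> run K n S orc [] [] = crun K n S x []"
      by (rule run_eq_clean) (auto simp: B_def)
    ultimately show "S \<in> {S. run K n S orc [] [] = Some v} \<union> B" by auto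
  qed
  hence "measure_pmf.prob T {S. crun K n S x [] = Some v} \<le> measure_pmf.prob T ({S. run K n S orc [] [] = Some v} \<union> B)"
    by (rule measure_pmf.finite_measure_mono) simp
  also have "\<dots> \<le> measure_pmf.prob T {S. run K n S orc [] [] = Some v} + measure_pmf.prob T B"
    by (rule measure_Un_le) simp_all
  finally have 1: "measure_pmf.prob T {S. crun K n S x [] = Some v} \<le>
      measure_pmf.prob T {S. run K n S orc [] [] = Some v} + measure_pmf.prob T B" .
  have "B \<subseteq> (\<Union>l\<in>{..<K}. E l)"
  proof
    fix S assume "S \<in> B"
    then obtain l where l: "l < length (cql K n S x [])"
      and ne: "orc (take l (cql K n S x [])) ! (cql K n S x [] ! l) \<noteq> x ! (cql K n S x [] ! l)"
      by (auto simp: B_def)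
    have "l < K" using l cql_length[of K n S x "[]"] by simp
    moreover have "cql K n S x [] ! l < n" using cql_bound l nth_mem by blast
    ultimately show "S \<in> (\<Union>l\<in>{..<K}. E l)" using l ne by (auto simp: E_def F_def)
  qed
  hence "measure_pmf.prob T B \<le> measure_pmf.prob T (\<Union>l\<in>{..<K}. E l)"
    by (rule measure_pmf.finite_measure_mono) simp
  also have "\<dots> \<le> (\<Sum>l<K. measure_pmf.prob T (E l))"
    by (rule measure_pmf.finite_measure_subadditive_finite) auto
  also have "\<dots> \<le> (\<Sum>l<K. real (K * t) / real r)"
  proof (rule sum_mono)
    fix l assume l: "l \<in> {..<K}"
    have Fb: "finite (F l ps) \<and> card (F l ps) \<le> K * t" for ps
    proof -
      have "card (F l ps) \<le> l * t"
        using oc_diff_card[OF oc, of ps] lx by (auto simp: F_def)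
      also have "\<dots> \<le> K * t" using l by simp
      finally show ?thesis by (simp add: F_def)
    qed
    have "measure_pmf.prob T (E l) = measure_pmf.prob (map_pmf (\<lambda>S. cql K n S x []) T)
             {L. l < length L \<and> L ! l \<in> F l (take l L)}"
      by (simp add: E_def vimage_def)
    also have "\<dots> \<le> real (K * t) / real r" by (rule spreadD[OF sp Fb])
    finally show "measure_pmf.prob T (E l) \<le> real (K * t) / real r" .
  qed
  also have "\<dots> = real (K * K * t) / real r" by simp
  finally show ?thesis using 1 by linarith
qed


lemma prob_mono_supp:
  assumes "\<And>w. w \<in> set_pmf M \<Longrightarrow> w \<in> Y \<Longrightarrow> w \<in> X"
  shows "measure_pmf.prob M Y \<le> measure_pmf.prob M X"
proof -
  have "measure_pmf.prob M Y = measure_pmf.prob M (Y \<inter> set_pmf M)" by (simp add: measure_Int_set_pmf)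
  also have "\<dots> \<le> measure_pmf.prob M X"
    by (rule measure_pmf.finite_measure_mono) (use assms in auto)
  finally show ?thesis .
qed

lemma prob_product:
  "measure_pmf.prob (pair_pmf M N) (A \<times> B) = measure_pmf.prob M A * measure_pmf.prob N B"
proof -
  have "measure_pmf.prob (pair_pmf M N) (A \<times> B) = measure_pmf.prob (pair_pmf M N) ((A \<times> B) \<inter> set_pmf (pair_pmf M N))"
    using measure_Int_set_pmf[of "pair_pmf M N" "A \<times> B"] by simp
  also have "(A \<times> B) \<inter> set_pmf (pair_pmf M N) = (A \<inter> set_pmf M) \<times> (B \<inter> set_pmf N)" by auto
  also have "measure_pmf.prob (pair_pmf M N) \<dots> = measure_pmf.prob M (A \<inter> set_pmf M) * measure_pmf.prob N (B \<inter> set_pmf N)"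
    by (rule measure_pmf_prob_product) (auto intro: countable_subset[OF _ countable_set_pmf])
  finally show ?thesis by (simp add: measure_Int_set_pmf)
qed

lemma prob_snd:
  "measure_pmf.prob (pair_pmf M N) {ab. snd ab \<in> B} = measure_pmf.prob N B"
proof -
  have "measure_pmf.prob (pair_pmf M N) {ab. snd ab \<in> B} = measure_pmf.prob (map_pmf snd (pair_pmf M N)) B"
    by (simp add: vimage_def)
  thus ?thesis by (simp add: map_snd_pair_pmf)
qed

lemma prob_pair_split:
  assumes "\<And>a. a \<in> set_pmf M \<Longrightarrow> a \<notin> X \<Longrightarrow> measure_pmf.prob N {b. (a,b) \<in> E} \<le> c" "0 \<le> c"
  shows "measure_pmf.prob (pair_pmf M N) E \<le> measure_pmf.prob M X + c"
proof -
  have "E \<subseteq> (X \<times> UNIV) \<union> (E \<inter> {ab. fst ab \<notin> X})" by auto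
  hence "measure_pmf.prob (pair_pmf M N) E \<le> measure_pmf.prob (pair_pmf M N) ((X \<times> UNIV) \<union> (E \<inter> {ab. fst ab \<notin> X}))"
    by (intro measure_pmf.finite_measure_mono) auto
  also have "\<dots> \<le> measure_pmf.prob (pair_pmf M N) (X \<times> UNIV) + measure_pmf.prob (pair_pmf M N) (E \<inter> {ab. fst ab \<notin> X})"
    by (rule measure_Un_le) simp_all
  also have "measure_pmf.prob (pair_pmf M N) (X \<times> UNIV) = measure_pmf.prob M X"
    by (simp add: prob_product)
  also have "measure_pmf.prob (pair_pmf M N) (E \<inter> {ab. fst ab \<notin> X}) \<le> c"
  proof (rule prob_pair_le)
    fix a assume a: "a \<in> set_pmf M"
    show "measure_pmf.prob N {b. (a, b) \<in> E \<inter> {ab. fst ab \<notin> X}} \<le> c"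
    proof (cases "a \<in> X")
      case True then show ?thesis using assms(2) by simp
    next
      case False
      have "measure_pmf.prob N {b. (a, b) \<in> E \<inter> {ab. fst ab \<notin> X}} \<le> measure_pmf.prob N {b. (a,b) \<in> E}"
        by (intro measure_pmf.finite_measure_mono) auto
      also have "\<dots> \<le> c" using assms(1)[OF a False] .
      finally show ?thesis .
    qed
  qed
  finally show ?thesis by simp
qed

lemma maj_poly:
  fixes p :: real
  assumes "2/3 \<le> p" "p \<le> 1"
  shows "20/27 \<le> p * (p * p) + p * (p * (1 - p)) + p * ((1 - p) * p) + (1 - p) * (p * p)"
proof -
  have a: "0 \<le> p - 2/3" using assms by simp
  have b: "0 \<le> 10/9 + 5 * p / 3 - 2 * p * p"
  proof -
    have "2 * p * p \<le> 2 * p" using assms by (simp add: mult_left_le)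
    thus ?thesis using assms by linarith
  qed
  have "0 \<le> (p - 2/3) * (10/9 + 5 * p / 3 - 2 * p * p)" using a b by simp
  moreover have "p * (p * p) + p * (p * (1 - p)) + p * ((1 - p) * p) + (1 - p) * (p * p) - 20/27
     = (p - 2/3) * (10/9 + 5 * p / 3 - 2 * p * p)" by (simp add: field_simps)
  ultimately show ?thesis by linarith
qed

lemma maj_prob:
  assumes "measure_pmf.prob M E \<ge> 2/3"
  shows "measure_pmf.prob (pair_pmf M (pair_pmf M M)) {(a,b,c). maj (a \<in> E) (b \<in> E) (c \<in> E)} \<ge> 20/27"
proof -
  define B where "B = map_pmf (\<lambda>a. a \<in> E) M"
  define p where "p = measure_pmf.prob M E"
  have pT: "pmf B True = p" unfolding B_def p_def by (simp add: pmf_map vimage_def)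
  have pF: "pmf B False = 1 - p" unfolding B_def p_def
    by (simp add: pmf_map vimage_def prob_compl'[symmetric] Compl_eq)
  define g where "g = (\<lambda>(a::'a,b::'a,c::'a). (a \<in> E, b \<in> E, c \<in> E))"
  have mapeq: "map_pmf g (pair_pmf M (pair_pmf M M)) = pair_pmf B (pair_pmf B B)"
  proof -
    have "map_pmf g (pair_pmf M (pair_pmf M M)) =
          map_pmf (\<lambda>(a, bc). (a \<in> E, (\<lambda>(b,c). (b \<in> E, c \<in> E)) bc)) (pair_pmf M (pair_pmf M M))"
      by (simp add: case_prod_unfold g_def)
    also have "\<dots> = pair_pmf B (map_pmf (\<lambda>(b,c). (b \<in> E, c \<in> E)) (pair_pmf M M))"
      unfolding B_def by (rule map_pair)
    also have "map_pmf (\<lambda>(b,c). (b \<in> E, c \<in> E)) (pair_pmf M M) = pair_pmf B B"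
      unfolding B_def by (rule map_pair)
    finally show ?thesis .
  qed
  have eq1: "{(a,b,c). maj (a \<in> E) (b \<in> E) (c \<in> E)} = g -` {(a,b,c). maj a b c}"
    by (auto simp: g_def)
  have "measure_pmf.prob (pair_pmf M (pair_pmf M M)) {(a,b,c). maj (a \<in> E) (b \<in> E) (c \<in> E)} =
        measure_pmf.prob (pair_pmf M (pair_pmf M M)) (g -` {(a,b,c). maj a b c})"
    by (simp only: eq1)
  also have "\<dots> = measure_pmf.prob (map_pmf g (pair_pmf M (pair_pmf M M))) {(a,b,c). maj a b c}"
    by (rule measure_map_pmf[symmetric])
  also have "\<dots> = measure_pmf.prob (pair_pmf B (pair_pmf B B)) {(a,b,c). maj a b c}"
    by (simp only: mapeq)
  also have "{(a,b,c). maj a b c} = {(True,True,True),(True,True,False),(True,False,True),(False,True,True)}"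
    by (auto simp: maj_def)
  also have "measure_pmf.prob (pair_pmf B (pair_pmf B B)) \<dots> =
      p * (p * p) + p * (p * (1 - p)) + p * ((1 - p) * p) + (1 - p) * (p * p)"
    by (simp add: measure_measure_pmf_finite pmf_pair pT pF)
  also have "\<dots> \<ge> 20/27" using assms measure_pmf.prob_le_1[of M E] unfolding p_def[symmetric]
    by (intro maj_poly) auto
  finally show ?thesis by simp
qed

lemma pass_prob:
  "measure_pmf.prob (Pi_pmf {..<s} d (\<lambda>_. P)) {w. \<forall>l<s. w l \<in> G} = measure_pmf.prob P G ^ s"
proof -
  have "{w. \<forall>l<s. w l \<in> G} = Pi {..<s} (\<lambda>_. G)" by (auto simp: Pi_def)
  thus ?thesis by (simp add: measure_Pi_pmf_Pi)
qed

lemma pow_le_inv: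
  fixes D :: real
  assumes "0 \<le> D" "D \<le> 1"
  shows "(1 - D) ^ s \<le> 1 / (1 + real s * D)"
proof -
  have "1 + real s * D \<le> (1 + D) ^ s" using assms by (intro Bernoulli_inequality) simp
  moreover have "(1 - D) ^ s * (1 + D) ^ s \<le> 1"
  proof -
    have "(1 - D) ^ s * (1 + D) ^ s = (1 - D * D) ^ s" by (simp add: power_mult_distrib[symmetric] algebra_simps)
    also have "\<dots> \<le> 1" using assms by (intro power_le_one) (auto simp: mult_le_one)
    finally show ?thesis .
  qed
  moreover have "0 \<le> (1 - D) ^ s" using assms by simp
  moreover have "0 < 1 + real s * D" using assms by (simp add: add_pos_nonneg)
  ultimately have "(1 - D) ^ s * (1 + real s * D) \<le> 1"
    by (meson order_trans mult_left_mono)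
  thus ?thesis using \<open>0 < 1 + real s * D\<close> by (simp add: field_simps)
qed


definition rep :: "nat \<Rightarrow> 'a list \<Rightarrow> 'a list" where
  "rep r z = concat (replicate r z)"

lemma length_rep[simp]: "length (rep r z) = r * length z"
  by (induction r) (auto simp: rep_def)

lemma rep_nth: "i < length z \<Longrightarrow> j < r \<Longrightarrow> rep r z ! (j * length z + i) = z ! i"
proof (induction r arbitrary: j)
  case 0 then show ?case by simp
next
  case (Suc r)
  have e: "rep (Suc r) z = z @ rep r z" by (simp add: rep_def)
  show ?case
  proof (cases j)
    case 0 then show ?thesis using Suc.prems by (simp add: e nth_append)
  next
    case (Suc j')
    have "rep (Suc r) z ! (j * length z + i) = rep r z ! (j' * length z + i)"
      using Suc by (simp add: e nth_append)
    then show ?thesis using Suc.IH[of j'] Suc.prems Suc by simp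
  qed
qed

lemma rep_in: "p \<in> P \<Longrightarrow> rep r p \<in> rep_prop r P"
  by (simp add: rep_def rep_prop_def)

lemma sum_blocks:
  fixes g :: "nat \<Rightarrow> 'b::comm_monoid_add"
  shows "(\<Sum>k<r * m. g k) = (\<Sum>j<r. \<Sum>i<m. g (j * m + i))"
proof -
  have "(\<Sum>k<r * m. g k) = (\<Sum>j<r. sum g {j * m..<j * m + m})"
    by (rule sum.nat_group[symmetric])
  also have "\<dots> = (\<Sum>j<r. \<Sum>i<m. g (j * m + i))"
  proof (rule sum.cong[OF refl])
    fix j
    have "{j * m..<j * m + m} = (\<lambda>i. j * m + i) ` {..<m}"
    proof (intro set_eqI iffI)
      fix k assume "k \<in> {j * m..<j * m + m}"
      hence "k = j * m + (k - j * m)" "k - j * m < m" by auto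
      thus "k \<in> (\<lambda>i. j * m + i) ` {..<m}" by blast
    qed auto
    thus "sum g {j * m..<j * m + m} = (\<Sum>i<m. g (j * m + i))"
      by (simp add: sum.reindex inj_on_def)
  qed
  finally show ?thesis .
qed

lemma card_lt_sum: fixes n :: nat shows "real (card {k. k < n \<and> P k}) = (\<Sum>k<n. of_bool (P k))"
proof -
  have e: "{k. k < n \<and> P k} = {k \<in> {..<n}. P k}" by auto
  have "real (card {k \<in> {..<n}. P k}) = (\<Sum>k\<in>{k \<in> {..<n}. P k}. 1)" by simp
  also have "\<dots> = (\<Sum>k<n. if P k then 1 else 0)" by (rule sum.inter_filter) simp
  also have "\<dots> = (\<Sum>k<n. of_bool (P k))" by (rule sum.cong) auto
  finally show ?thesis unfolding e .
qed

lemma hdist_sum: "hdist x y = (\<Sum>k<length x. of_bool (x ! k \<noteq> y ! k)) / real (length x)"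
  unfolding hdist_def card_lt_sum ..

lemma hdist_self: "hdist x x = 0"
  by (simp add: hdist_def)

lemma hdist_triangle:
  assumes "length y = length x" "length z = length x"
  shows "hdist x z \<le> hdist x y + hdist y z"
proof -
  have "card {i. i < length x \<and> x ! i \<noteq> z ! i} \<le>
        card ({i. i < length x \<and> x ! i \<noteq> y ! i} \<union> {i. i < length x \<and> y ! i \<noteq> z ! i})"
    by (intro card_mono) auto
  also have "\<dots> \<le> card {i. i < length x \<and> x ! i \<noteq> y ! i} + card {i. i < length x \<and> y ! i \<noteq> z ! i}"
    by (rule card_Un_le)
  finally have "real (card {i. i < length x \<and> x ! i \<noteq> z ! i}) \<le>
     real (card {i. i < length x \<and> x ! i \<noteq> y ! i}) + real (card {i. i < length y \<and> y ! i \<noteq> z ! i})"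
    using assms by simp
  thus ?thesis unfolding hdist_def using assms by (simp add: add_divide_distrib[symmetric] divide_right_mono)
qed

lemma hdist_rep:
  assumes "length z = m" "length p = m" "0 < r"
  shows "hdist (rep r z) (rep r p) = hdist z p"
proof -
  have "(\<Sum>k<r * m. of_bool (rep r z ! k \<noteq> rep r p ! k)) = (\<Sum>j<r. \<Sum>i<m. of_bool (rep r z ! (j * m + i) \<noteq> rep r p ! (j * m + i)) :: real)"
    by (rule sum_blocks)
  also have "\<dots> = (\<Sum>j<r. \<Sum>i<m. of_bool (z ! i \<noteq> p ! i))"
    using rep_nth[of _ z] rep_nth[of _ p] assms by (intro sum.cong refl) auto
  also have "\<dots> = real r * (\<Sum>i<m. of_bool (z ! i \<noteq> p ! i))" by simp
  finally show ?thesis using assms unfolding hdist_sum by (simp add: mult.commute)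
qed

lemma far_step:
  assumes far: "far \<epsilon> (rep_prop r P) x" and lx: "length x = r * m" and r: "0 < r"
    and p: "p \<in> P" "length p = m" and z: "length z = m" and close: "hdist z p < \<epsilon> / 2"
  shows "hdist x (rep r z) > \<epsilon> / 2"
proof -
  have "hdist x (rep r p) \<ge> \<epsilon>" using far rep_in[OF p(1), of r] lx p(2) by (auto simp: far_def)
  moreover have "hdist x (rep r p) \<le> hdist x (rep r z) + hdist (rep r z) (rep r p)"
    by (rule hdist_triangle) (use lx z p in auto)
  moreover have "hdist (rep r z) (rep r p) = hdist z p" by (rule hdist_rep) (use z p r in auto)
  ultimately show ?thesis using close by linarith
qed


definition trip :: "nat \<Rightarrow> nat \<Rightarrow> (nat \<times> nat \<times> nat) pmf" where
  "trip m r = pair_pmf (U r) (pair_pmf (U m) (U r))"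

definition Pb :: "nat \<Rightarrow> nat \<Rightarrow> (nat \<Rightarrow> nat) pmf" where
  "Pb m r = Pi_pmf {..<m} 0 (\<lambda>_. U r)"

definition S3 :: "'a list \<Rightarrow> nat \<Rightarrow> nat \<Rightarrow> nat" where
  "S3 x m r = (\<Sum>j<r. \<Sum>i<m. card {c. c < r \<and> x ! (j * m + i) \<noteq> x ! (c * m + i)})"

lemma pmfU: "0 < r \<Longrightarrow> c < r \<Longrightarrow> pmf (U r) c = 1 / real r"
  by (subst pmf_of_set) auto

lemma set_trip: "0 < r \<Longrightarrow> 0 < m \<Longrightarrow> set_pmf (trip m r) = {..<r} \<times> {..<m} \<times> {..<r}"
  by (simp add: trip_def setU)

lemma trip_prob:
  assumes r: "0 < r" and m: "0 < m"
  shows "measure_pmf.prob (trip m r) {(j,i,c). x ! (j * m + i) \<noteq> x ! (c * m + i)} = real (S3 x m r) / (real r * real m * real r)"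
proof -
  let ?E = "{(j,i,c). x ! (j * m + i) \<noteq> x ! (c * m + i)}"
  let ?B = "{..<r} \<times> {..<m} \<times> {..<r}"
  have fin: "finite (?E \<inter> ?B)" by (rule finite_subset[of _ ?B]) auto
  have "measure_pmf.prob (trip m r) ?E = measure_pmf.prob (trip m r) (?E \<inter> ?B)"
    using measure_Int_set_pmf[of "trip m r" ?E] set_trip[OF r m] by simp
  also have "\<dots> = (\<Sum>w\<in>?E \<inter> ?B. pmf (trip m r) w)" using fin by (rule measure_measure_pmf_finite)
  also have "\<dots> = (\<Sum>w\<in>?E \<inter> ?B. 1 / (real r * real m * real r))"
    by (rule sum.cong) (auto simp: trip_def pmf_pair r m pmfU)
  also have "\<dots> = real (card (?E \<inter> ?B)) / (real r * real m * real r)" by simp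
  also have "?E \<inter> ?B = (SIGMA j:{..<r}. SIGMA i:{..<m}. {c. c < r \<and> x ! (j * m + i) \<noteq> x ! (c * m + i)})"
    by auto
  also have "card \<dots> = S3 x m r" by (simp add: S3_def card_SigmaI)
  finally show ?thesis .
qed

lemma finite_Pb: "0 < r \<Longrightarrow> finite (set_pmf (Pb m r))"
  unfolding Pb_def by (rule finite_subset[OF set_Pi_pmf_subset']) (auto intro!: finite_PiE_dflt simp: setU)

lemma Pb_component: "i < m \<Longrightarrow> map_pmf (\<lambda>\<beta>. \<beta> i) (Pb m r) = U r"
  by (simp add: Pb_def Pi_pmf_component)

lemma exp_f:
  assumes r: "0 < r" and m: "0 < m" and lx: "length x = r * m"
  shows "measure_pmf.expectation (Pb m r) (\<lambda>\<beta>. hdist x (rep r (zv m x \<beta>))) = real (S3 x m r) / (real r * real m * real r)"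
proof -
  have lz: "length (zv m x \<beta>) = m" for \<beta> by (simp add: zv_def)
  have f: "hdist x (rep r (zv m x \<beta>)) =
        (\<Sum>j<r. \<Sum>i<m. of_bool (x ! (j * m + i) \<noteq> x ! (\<beta> i * m + i))) / (real r * real m)" for \<beta>
  proof -
    have "hdist x (rep r (zv m x \<beta>)) = (\<Sum>k<r * m. of_bool (x ! k \<noteq> rep r (zv m x \<beta>) ! k)) / real (r * m)"
      unfolding hdist_sum lx ..
    also have "(\<Sum>k<r * m. of_bool (x ! k \<noteq> rep r (zv m x \<beta>) ! k) :: real) =
        (\<Sum>j<r. \<Sum>i<m. of_bool (x ! (j * m + i) \<noteq> rep r (zv m x \<beta>) ! (j * m + i)))"
      by (rule sum_blocks)
    also have "\<dots> = (\<Sum>j<r. \<Sum>i<m. of_bool (x ! (j * m + i) \<noteq> x ! (\<beta> i * m + i)))"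
      using rep_nth[of _ "zv m x \<beta>"] lz by (intro sum.cong refl) (auto simp: zv_def)
    finally show ?thesis by simp
  qed
  have int: "integrable (measure_pmf (Pb m r)) g" for g :: "_ \<Rightarrow> real"
    by (rule integrable_measure_pmf_finite[OF finite_Pb[OF r]])
  have comp: "measure_pmf.expectation (Pb m r) (\<lambda>\<beta>. of_bool (x ! (j * m + i) \<noteq> x ! (\<beta> i * m + i)) :: real)
      = real (card {c. c < r \<and> x ! (j * m + i) \<noteq> x ! (c * m + i)}) / real r" if i: "i < m" for i j
  proof -
    have "measure_pmf.expectation (Pb m r) (\<lambda>\<beta>. of_bool (x ! (j * m + i) \<noteq> x ! (\<beta> i * m + i)) :: real)
        = measure_pmf.expectation (map_pmf (\<lambda>\<beta>. \<beta> i) (Pb m r)) (\<lambda>c. of_bool (x ! (j * m + i) \<noteq> x ! (c * m + i)) :: real)"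
      by simp
    also have "\<dots> = measure_pmf.expectation (U r) (\<lambda>c. of_bool (x ! (j * m + i) \<noteq> x ! (c * m + i)) :: real)"
      by (simp only: Pb_component[OF i])
    also have "\<dots> = (\<Sum>c<r. of_bool (x ! (j * m + i) \<noteq> x ! (c * m + i))) / real r"
      using r by (subst integral_pmf_of_set) auto
    also have "(\<Sum>c<r. of_bool (x ! (j * m + i) \<noteq> x ! (c * m + i)) :: real) = real (card {c. c < r \<and> x ! (j * m + i) \<noteq> x ! (c * m + i)})"
      by (rule card_lt_sum[symmetric])
    finally show ?thesis .
  qed
  have "measure_pmf.expectation (Pb m r) (\<lambda>\<beta>. hdist x (rep r (zv m x \<beta>))) =
      measure_pmf.expectation (Pb m r) (\<lambda>\<beta>. (\<Sum>j<r. \<Sum>i<m. of_bool (x ! (j * m + i) \<noteq> x ! (\<beta> i * m + i))) / (real r * real m))"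
    by (simp only: f)
  also have "\<dots> = (\<Sum>j<r. \<Sum>i<m. measure_pmf.expectation (Pb m r) (\<lambda>\<beta>. of_bool (x ! (j * m + i) \<noteq> x ! (\<beta> i * m + i)) :: real)) / (real r * real m)"
    by (simp add: integral_sum int del: sum_of_bool_eq)
  also have "\<dots> = (\<Sum>j<r. \<Sum>i<m. real (card {c. c < r \<and> x ! (j * m + i) \<noteq> x ! (c * m + i)}) / real r) / (real r * real m)"
    by (simp add: comp del: sum_of_bool_eq)
  also have "\<dots> = real (S3 x m r) / (real r * real m * real r)"
    by (simp add: S3_def sum_divide_distrib[symmetric])
  finally show ?thesis .
qed

lemma markov_f:
  assumes r: "0 < r" and m: "0 < m" and lx: "length x = r * m" and a: "0 < a"
  shows "measure_pmf.prob (Pb m r) {\<beta>. a \<le> hdist x (rep r (zv m x \<beta>))} \<le> real (S3 x m r) / (real r * real m * real r) / a"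
proof -
  have "measure_pmf.prob (Pb m r) {\<beta>\<in>space (measure_pmf (Pb m r)). hdist x (rep r (zv m x \<beta>)) \<ge> a}
     \<le> measure_pmf.expectation (Pb m r) (\<lambda>\<beta>. hdist x (rep r (zv m x \<beta>))) / a"
    by (rule integral_Markov_inequality_measure[where A=UNIV])
       (auto simp: a integrable_measure_pmf_finite[OF finite_Pb[OF r]] hdist_def)
  thus ?thesis using exp_f[OF r m lx] by simp
qed


definition posA :: "nat \<Rightarrow> (nat \<Rightarrow> nat \<times> nat \<times> nat) \<Rightarrow> nat \<Rightarrow> nat" where
  "posA m w k = (case w (k div 2) of (j, i, c) \<Rightarrow> if even k then j * m + i else c * m + i)"

definition LA :: "nat \<Rightarrow> nat \<Rightarrow> (nat \<Rightarrow> nat \<times> nat \<times> nat) \<Rightarrow> nat list" where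
  "LA m s w = map (posA m w) [0..<2 * s]"

definition DA :: "nat \<Rightarrow> nat \<Rightarrow> (nat \<Rightarrow> nat \<times> nat \<times> nat) \<Rightarrow> 'a strategy" where
  "DA m s w as = (if length as < 2 * s then Inl (posA m w (length as))
                  else Inr (\<forall>l<s. as ! (2 * l) = as ! (2 * l + 1)))"

definition PA :: "nat \<Rightarrow> nat \<Rightarrow> nat \<Rightarrow> (nat \<Rightarrow> nat \<times> nat \<times> nat) pmf" where
  "PA m r s = Pi_pmf {..<s} (0, 0, 0) (\<lambda>_. trip m r)"

definition Gs :: "'a list \<Rightarrow> nat \<Rightarrow> (nat \<times> nat \<times> nat) set" where
  "Gs x m = {(j, i, c). x ! (j * m + i) = x ! (c * m + i)}"

lemma DA_run_gen:
  assumes pos: "\<And>k. k < 2 * s \<Longrightarrow> posA m w k < n"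
  shows "length as + d = 2 * s \<Longrightarrow> (\<forall>k<length as. as ! k = x ! posA m w k) \<Longrightarrow>
     crun d n (DA m s w) x as = Some (\<forall>l<s. x ! posA m w (2 * l) = x ! posA m w (2 * l + 1)) \<and>
     cql d n (DA m s w) x as = map (posA m w) [length as..<2 * s]"
proof (induction d arbitrary: as)
  case 0
  have "\<And>l. l < s \<Longrightarrow> as ! (2 * l) = x ! posA m w (2 * l) \<and> as ! (2 * l + 1) = x ! posA m w (2 * l + 1)"
    using 0 by simp
  then show ?case using 0 by (auto simp: DA_def)
next
  case (Suc d)
  let ?p = "posA m w (length as)"
  have lt: "length as < 2 * s" using Suc.prems by simp
  have D: "DA m s w as = Inl ?p" using lt by (simp add: DA_def)
  have pn: "\<not> n \<le> ?p" using pos[OF lt] by simp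
  have as': "\<forall>k<length (as @ [x ! ?p]). (as @ [x ! ?p]) ! k = x ! posA m w k"
    using Suc.prems by (auto simp: nth_append less_Suc_eq)
  have IH: "crun d n (DA m s w) x (as @ [x ! ?p]) = Some (\<forall>l<s. x ! posA m w (2 * l) = x ! posA m w (2 * l + 1)) \<and>
     cql d n (DA m s w) x (as @ [x ! ?p]) = map (posA m w) [length (as @ [x ! ?p])..<2 * s]"
    by (rule Suc.IH[OF _ as']) (use Suc.prems in simp)
  show ?case using D pn IH lt by (simp add: upt_conv_Cons)
qed

lemma DA_run:
  assumes pos: "\<And>k. k < 2 * s \<Longrightarrow> posA m w k < n"
  shows "res (2 * s) n (DA m s w) x [] = (\<forall>l<s. w l \<in> Gs x m) \<and>
         cql (2 * s) n (DA m s w) x [] = LA m s w"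
proof -
  have *: "crun (2 * s) n (DA m s w) x [] = Some (\<forall>l<s. x ! posA m w (2 * l) = x ! posA m w (2 * l + 1)) \<and>
     cql (2 * s) n (DA m s w) x [] = map (posA m w) [0..<2 * s]"
    using DA_run_gen[OF pos, where as="[]" and d="2 * s" and x=x] by simp
  have "(\<forall>l<s. x ! posA m w (2 * l) = x ! posA m w (2 * l + 1)) = (\<forall>l<s. w l \<in> Gs x m)"
    by (auto simp: posA_def Gs_def split: prod.splits)
  thus ?thesis using * by (simp add: res_def LA_def)
qed

lemma spread_pairL:
  assumes r: "0 < r" and m: "0 < m"
  shows "spread r (map_pmf (\<lambda>(j, i, c). [j * m + i, c * m + i]) (trip m r))"
proof (rule spreadI)
  fix l N :: nat and F :: "nat list \<Rightarrow> nat set"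
  assume F: "\<And>ps. finite (F ps) \<and> card (F ps) \<le> N"
  have b: "measure_pmf.prob (U r) {c. c * m + i \<in> F ps} \<le> real N / real r" for i ps
  proof -
    have "measure_pmf.prob (U r) {c. c * m + i \<in> F ps} \<le> real (card (F ps)) / real r"
      by (rule unif_shift_le) (use F r m in auto)
    also have "\<dots> \<le> real N / real r" using F[of ps] by (simp add: divide_right_mono)
    finally show ?thesis .
  qed
  let ?E = "{L. l < length L \<and> L ! l \<in> F (take l L)}"
  have "measure_pmf.prob (map_pmf (\<lambda>(j, i, c). [j * m + i, c * m + i]) (trip m r)) ?E =
        measure_pmf.prob (trip m r) {(j, i, c). l < 2 \<and> [j * m + i, c * m + i] ! l \<in> F (take l [j * m + i, c * m + i])}"
    by (simp add: vimage_def case_prod_unfold numeral_2_eq_2)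
  also have "\<dots> \<le> real N / real r"
  proof (cases l)
    case 0
    show ?thesis unfolding trip_def
    proof (rule prob_pair_le2)
      fix ic :: "nat \<times> nat" 
      show "measure_pmf.prob (U r) {a. (a, ic) \<in> {(j, i, c). l < 2 \<and> [j * m + i, c * m + i] ! l \<in> F (take l [j * m + i, c * m + i])}}
            \<le> real N / real r"
        using b[of "fst ic" "[]"] 0 by (simp add: case_prod_unfold)
    qed
  next
    case (Suc l')
    show ?thesis
    proof (cases l')
      case 0
      show ?thesis unfolding trip_def
      proof (rule prob_pair_le)
        fix j assume "j \<in> set_pmf (U r)"
        show "measure_pmf.prob (pair_pmf (U m) (U r)) {ic. (j, ic) \<in> {(j, i, c). l < 2 \<and> [j * m + i, c * m + i] ! l \<in> F (take l [j * m + i, c * m + i])}}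
            \<le> real N / real r"
        proof (rule prob_pair_le)
          fix i assume "i \<in> set_pmf (U m)"
          show "measure_pmf.prob (U r) {c. (i, c) \<in> {ic. (j, ic) \<in> {(j, i, c). l < 2 \<and> [j * m + i, c * m + i] ! l \<in> F (take l [j * m + i, c * m + i])}}}
            \<le> real N / real r"
            using b[of i "[j * m + i]"] Suc 0 by simp
        qed
      qed
    next
      case (Suc l'')
      then show ?thesis using \<open>l = Suc l'\<close> by (simp add: case_prod_unfold)
    qed
  qed
  finally show "measure_pmf.prob (map_pmf (\<lambda>(j, i, c). [j * m + i, c * m + i]) (trip m r)) ?E \<le> real N / real r" .
qed

lemma spread_LA:
  assumes r: "0 < r" and m: "0 < m"
  shows "spread r (map_pmf (LA m s) (PA m r s))"
proof (induction s)
  case 0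
  show ?case by (simp add: LA_def map_pmf_const spread_nil)
next
  case (Suc s)
  have ins: "{..<Suc s} = insert s {..<s}" by auto
  have "map_pmf (LA m (Suc s)) (PA m r (Suc s)) =
        map_pmf (\<lambda>(t, w'). LA m (Suc s) (w'(s := t))) (pair_pmf (trip m r) (PA m r s))"
    unfolding PA_def ins by (subst Pi_pmf_insert) (simp_all add: pmf.map_comp o_def case_prod_unfold)
  also have "\<dots> = map_pmf (\<lambda>(t, w'). LA m s w' @ (\<lambda>(j, i, c). [j * m + i, c * m + i]) t) (pair_pmf (trip m r) (PA m r s))"
  proof (rule pmf.map_cong[OF refl])
    fix tw assume "tw \<in> set_pmf (pair_pmf (trip m r) (PA m r s))"
    obtain t w' where tw: "tw = (t, w')" by (cases tw)
    have "map (posA m (w'(s := t))) [0..<2 * s] = map (posA m w') [0..<2 * s]"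
      by (intro map_cong refl) (auto simp: posA_def)
    moreover have "[2 * s..<2 * Suc s] = [2 * s, 2 * s + 1]" by (simp add: upt_rec)
    moreover have "[0..<2 * Suc s] = [0..<2 * s] @ [2 * s..<2 * Suc s]" by (simp add: upt_add_eq_append[symmetric])
    ultimately show "(\<lambda>(t, w'). LA m (Suc s) (w'(s := t))) tw = (\<lambda>(t, w'). LA m s w' @ (\<lambda>(j, i, c). [j * m + i, c * m + i]) t) tw"
      by (auto simp: tw LA_def posA_def split: prod.splits)
  qed
  also have "\<dots> = map_pmf (\<lambda>(w', t). LA m s w' @ (\<lambda>(j, i, c). [j * m + i, c * m + i]) t) (pair_pmf (PA m r s) (trip m r))"
    by (subst pair_commute_pmf) (simp add: pmf.map_comp o_def case_prod_unfold)
  finally have e: "map_pmf (LA m (Suc s)) (PA m r (Suc s)) = \<dots>" .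
  show ?case unfolding e
    by (rule spread_append[where ll="2 * s"]) (use Suc spread_pairL[OF r m] in \<open>auto simp: LA_def\<close>)
qed

lemma pass_prob_PA:
  "measure_pmf.prob (PA m r s) {w. \<forall>l<s. w l \<in> Gs x m} = measure_pmf.prob (trip m r) (Gs x m) ^ s"
  unfolding PA_def by (rule pass_prob)


definition tester :: "nat \<Rightarrow> nat \<Rightarrow> nat \<Rightarrow> nat \<Rightarrow> (nat \<Rightarrow> nat \<times> nat \<times> nat) \<Rightarrow> (nat \<Rightarrow> nat) \<Rightarrow>
    'a strategy \<Rightarrow> 'a strategy \<Rightarrow> 'a strategy \<Rightarrow> 'a strategy" where
  "tester m r s q w \<beta> D1 D2 D3 = seqf (m * r) (2 * s) (DA m s w)
     (\<lambda>b. if b then mapq m (m * r) \<beta> (sim m (3 * q) (maj3 m q D1 D2 D3) [] []) else (\<lambda>_. Inr False)) []"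

lemma map_pair_bind: "map_pmf g (pair_pmf M N) = bind_pmf N (\<lambda>b. map_pmf (\<lambda>a. g (a, b)) M)"
  by (simp add: pair_commute_pmf[of M N] pair_pmf_def map_bind_pmf bind_map_pmf map_pmf_def bind_assoc_pmf bind_return_pmf bind_commute_pmf[of M])

lemma tester_clean:
  assumes r: "0 < r" and m: "0 < m" and lx: "length x = m * r"
    and w: "\<And>l. l < s \<Longrightarrow> w l \<in> {..<r} \<times> {..<m} \<times> {..<r}" and b: "\<And>v. \<beta> v < r"
    and K: "2 * s + 3 * q \<le> K"
  shows "crun K (m * r) (tester m r s q w \<beta> D1 D2 D3) x [] =
           Some (if (\<forall>l<s. w l \<in> Gs x m) then maj (res q m D1 (zv m x \<beta>) []) (res q m D2 (zv m x \<beta>) []) (res q m D3 (zv m x \<beta>) []) else False) \<and>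
         cql K (m * r) (tester m r s q w \<beta> D1 D2 D3) x [] =
           LA m s w @ (if (\<forall>l<s. w l \<in> Gs x m) then map (\<lambda>v. \<beta> v * m + v) (cql (K - 2 * s) m (sim m (3 * q) (maj3 m q D1 D2 D3) [] []) (zv m x \<beta>) []) else [])"
proof -
  define k where "k = K - 2 * s"
  have Kk: "K = 2 * s + k" using K by (simp add: k_def)
  have kq: "3 * q \<le> k" using K by (simp add: k_def)
  let ?pass = "\<forall>l<s. w l \<in> Gs x m"
  let ?Kf = "\<lambda>b. if b then mapq m (m * r) \<beta> (sim m (3 * q) (maj3 m q D1 D2 D3) [] []) else (\<lambda>_. Inr False :: nat + bool)"
  have pos: "posA m w k' < m * r" if "k' < 2 * s" for k'
  proof -
    obtain j i c where e: "w (k' div 2) = (j, i, c)" by (cases "w (k' div 2)") auto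
    have "w (k' div 2) \<in> {..<r} \<times> {..<m} \<times> {..<r}" using w that by simp
    hence "j < r" "i < m" "c < r" using e by auto
    thus ?thesis using e pos_lt by (auto simp: posA_def)
  qed
  have DA: "res (2 * s) (m * r) (DA m s w) x [] = ?pass \<and> cql (2 * s) (m * r) (DA m s w) x [] = LA m s w"
    by (rule DA_run) (use pos in auto)
  have lz: "length (zv m x \<beta>) = m" by (simp add: zv_def)
  have mq: "crun k (m * r) (mapq m (m * r) \<beta> S) x [] = crun k m S (zv m x \<beta>) [] \<and>
       cql k (m * r) (mapq m (m * r) \<beta> S) x [] = map (\<lambda>v. \<beta> v * m + v) (cql k m S (zv m x \<beta>) [])" for S :: "'a strategy"
    by (rule mapq_run) (use b pos_lt in auto)
  have inner: "crun k (m * r) (?Kf ?pass) x [] =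
      Some (if ?pass then maj (res q m D1 (zv m x \<beta>) []) (res q m D2 (zv m x \<beta>) []) (res q m D3 (zv m x \<beta>) []) else False)"
  proof (cases ?pass)
    case True
    have "crun k m (sim m (3 * q) (maj3 m q D1 D2 D3) [] []) (zv m x \<beta>) (map ((!) (zv m x \<beta>)) []) =
          crun (3 * q) m (maj3 m q D1 D2 D3) (zv m x \<beta>) []"
      by (rule sim_run[OF lz kq])
    then show ?thesis using True mq maj3_run by simp
  next
    case False
    hence e: "?Kf ?pass = (\<lambda>_. Inr False)" by (simp only: if_False)
    show ?thesis unfolding e using False by (cases k) auto
  qed
  have c1: "crun K (m * r) (tester m r s q w \<beta> D1 D2 D3) x [] =
           Some (if ?pass then maj (res q m D1 (zv m x \<beta>) []) (res q m D2 (zv m x \<beta>) []) (res q m D3 (zv m x \<beta>) []) else False)"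
    unfolding tester_def Kk by (rule seqf_run) (use DA inner in simp)
  have inner2: "cql k (m * r) (?Kf ?pass) x [] =
       (if ?pass then map (\<lambda>v. \<beta> v * m + v) (cql k m (sim m (3 * q) (maj3 m q D1 D2 D3) [] []) (zv m x \<beta>) []) else [])"
  proof (cases ?pass)
    case True then show ?thesis using mq by simp
  next
    case False
    hence e: "?Kf ?pass = (\<lambda>_. Inr False)" by (simp only: if_False)
    show ?thesis unfolding e using False by (cases k) auto
  qed
  have c2: "cql K (m * r) (tester m r s q w \<beta> D1 D2 D3) x [] =
           LA m s w @ (if ?pass then map (\<lambda>v. \<beta> v * m + v) (cql k m (sim m (3 * q) (maj3 m q D1 D2 D3) [] []) (zv m x \<beta>) []) else [])"
    unfolding tester_def Kk seqf_cql using DA inner2 by (simp add: LA_def)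
  show ?thesis using c1 c2 unfolding k_def by (simp only:)
qed


definition Om :: "nat \<Rightarrow> nat \<Rightarrow> nat \<Rightarrow> 'a strategy pmf \<Rightarrow>
   ((nat \<Rightarrow> nat \<times> nat \<times> nat) \<times> (nat \<Rightarrow> nat) \<times> 'a strategy \<times> 'a strategy \<times> 'a strategy) pmf" where
  "Om m r s T = pair_pmf (PA m r s) (pair_pmf (Pb m r) (pair_pmf T (pair_pmf T T)))"

definition Tp :: "nat \<Rightarrow> nat \<Rightarrow> nat \<Rightarrow> nat \<Rightarrow> 'a strategy pmf \<Rightarrow> 'a strategy pmf" where
  "Tp m r s q T = map_pmf (\<lambda>(w, \<beta>, D1, D2, D3). tester m r s q w \<beta> D1 D2 D3) (Om m r s T)"

lemma PA_support:
  assumes "w \<in> set_pmf (PA m r s)" "l < s" "0 < r" "0 < m"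
  shows "w l \<in> {..<r} \<times> {..<m} \<times> {..<r}"
proof -
  have "w \<in> PiE_dflt {..<s} (0, 0, 0) (set_pmf \<circ> (\<lambda>_. trip m r))"
    using set_Pi_pmf_subset'[of "{..<s}" "(0,0,0)" "\<lambda>_. trip m r"] assms(1) by (auto simp: PA_def)
  thus ?thesis using assms(2-4) set_trip by (auto simp: PiE_dflt_def)
qed

lemma Pb_support: "\<beta> \<in> set_pmf (Pb m r) \<Longrightarrow> 0 < r \<Longrightarrow> \<beta> v < r"
  unfolding Pb_def by (rule PiU_support) auto

lemma prob_Tp: "measure_pmf.prob (Tp m r s q T) {S. Q S} =
   measure_pmf.prob (Om m r s T) {(w, \<beta>, D1, D2, D3). Q (tester m r s q w \<beta> D1 D2 D3)}"
  unfolding Tp_def by (simp add: vimage_def case_prod_unfold)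

lemma spread_Tp:
  assumes r: "0 < r" and m: "0 < m" and lx: "length x = m * r" and K: "2 * s + 3 * q \<le> K"
  shows "spread r (map_pmf (\<lambda>S. cql K (m * r) S x []) (Tp m r s q T))"
proof -
  define R where "R w bd = (case bd of (\<beta>, D1, D2, D3) \<Rightarrow>
      if (\<forall>l<s. w l \<in> Gs x m) then map (\<lambda>v. \<beta> v * m + v) (cql (K - 2 * s) m (sim m (3 * q) (maj3 m q D1 D2 D3) [] []) (zv m x \<beta>) []) else [])"
    for w and bd :: "(nat \<Rightarrow> nat) \<times> 'a strategy \<times> 'a strategy \<times> 'a strategy"
  have "map_pmf (\<lambda>S. cql K (m * r) S x []) (Tp m r s q T) =
        map_pmf (\<lambda>(w, bd). LA m s w @ R w bd) (Om m r s T)"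
    unfolding Tp_def pmf.map_comp
  proof (rule pmf.map_cong[OF refl])
    fix om assume om: "om \<in> set_pmf (Om m r s T)"
    obtain w \<beta> D1 D2 D3 where e: "om = (w, \<beta>, D1, D2, D3)" by (cases om) auto
    have w: "w \<in> set_pmf (PA m r s)" and b: "\<beta> \<in> set_pmf (Pb m r)" using om by (auto simp: e Om_def)
    show "((\<lambda>S. cql K (m * r) S x []) \<circ> (\<lambda>(w, \<beta>, D1, D2, D3). tester m r s q w \<beta> D1 D2 D3)) om =
          (\<lambda>(w, bd). LA m s w @ R w bd) om"
      using tester_clean[OF r m lx _ _ K, of w \<beta> D1 D2 D3] PA_support[OF w _ r m] Pb_support[OF b r]
      by (simp add: e R_def)
  qed
  moreover have "spread r (map_pmf (\<lambda>(w, bd). LA m s w @ R w bd) (Om m r s T))"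
    unfolding Om_def
  proof (rule spread_append[where ll = "2 * s"])
    show "spread r (map_pmf (LA m s) (PA m r s))" by (rule spread_LA[OF r m])
  next
    fix w
    show "spread r (map_pmf (R w) (pair_pmf (Pb m r) (pair_pmf T (pair_pmf T T))))"
    proof (cases "\<forall>l<s. w l \<in> Gs x m")
      case False
      hence "R w = (\<lambda>_. [])" by (auto simp: R_def fun_eq_iff split: prod.splits)
      then show ?thesis by (simp add: map_pmf_const spread_nil)
    next
      case True
      show ?thesis unfolding map_pair_bind
      proof (rule spread_bind)
        fix Ds :: "'a strategy \<times> 'a strategy \<times> 'a strategy"
        obtain D1 D2 D3 where Ds: "Ds = (D1, D2, D3)" by (cases Ds) auto
        have "map_pmf (\<lambda>a. R w (a, Ds)) (Pb m r) = map_pmf (\<lambda>\<beta>. map (\<lambda>v. \<beta> v * m + v)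
               (cql (K - 2 * s) m (sim m (3 * q) (maj3 m q D1 D2 D3) [] []) (zv m x \<beta>) []))
               (Pi_pmf ({..<m} - set []) 0 (\<lambda>_. U r))"
          using True by (simp add: R_def Ds Pb_def)
        moreover have "spread r \<dots>" by (rule spread_sim[OF r m]) simp
        ultimately show "spread r (map_pmf (\<lambda>a. R w (a, Ds)) (Pb m r))" by simp
      qed
    qed
  qed (simp add: LA_def)
  ultimately show ?thesis by simp
qed


lemma clean_om:
  assumes r: "0 < r" and m: "0 < m" and lx: "length x = m * r" and K: "2 * s + 3 * q \<le> K"
    and om: "(w, \<beta>, D1, D2, D3) \<in> set_pmf (Om m r s T)"
  shows "crun K (m * r) (tester m r s q w \<beta> D1 D2 D3) x [] =
           Some (if (\<forall>l<s. w l \<in> Gs x m) then maj (res q m D1 (zv m x \<beta>) []) (res q m D2 (zv m x \<beta>) []) (res q m D3 (zv m x \<beta>) []) else False)"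
proof -
  have w: "w \<in> set_pmf (PA m r s)" and b: "\<beta> \<in> set_pmf (Pb m r)" using om by (auto simp: Om_def)
  show ?thesis
    using tester_clean[OF r m lx _ _ K, of w \<beta> D1 D2 D3] PA_support[OF w _ r m] Pb_support[OF b r] by simp
qed

lemma member_prob:
  assumes r: "0 < r" and m: "0 < m" and lx: "length x = m * r" and K: "2 * s + 3 * q \<le> K"
    and std: "std_tester P \<epsilon>' m q T" and x: "x \<in> rep_prop r P"
  shows "measure_pmf.prob (Tp m r s q T) {S. crun K (m * r) S x [] = Some True} \<ge> 20 / 27"
proof -
  obtain p where p: "p \<in> P" and xp: "x = rep r p" using x by (auto simp: rep_prop_def rep_def)
  have lp: "length p = m" using lx xp r by simp
  have xnth: "x ! (j * m + i) = p ! i" if "j < r" "i < m" for j i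
    using rep_nth[of i p j r] that lp xp by simp
  define E where "E = {D. res q m D p [] = True}"
  have PE: "measure_pmf.prob T E \<ge> 2 / 3"
  proof -
    have "measure_pmf.prob T {D. run q m D (\<lambda>_. p) [] [] = Some True} \<ge> 2 / 3"
      using std p lp by (auto simp: std_tester_def)
    moreover have "{D. run q m D (\<lambda>_. p) [] [] = Some True} = E"
      by (auto simp: E_def res_def run_const split: option.splits)
    ultimately show ?thesis by simp
  qed
  have "measure_pmf.prob (Om m r s T) {om. snd (snd om) \<in> {(a, b, c). maj (a \<in> E) (b \<in> E) (c \<in> E)}}
      \<le> measure_pmf.prob (Om m r s T) {(w, \<beta>, D1, D2, D3). crun K (m * r) (tester m r s q w \<beta> D1 D2 D3) x [] = Some True}"
  proof (rule prob_mono_supp)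
    fix om assume om: "om \<in> set_pmf (Om m r s T)" and in1: "om \<in> {om. snd (snd om) \<in> {(a, b, c). maj (a \<in> E) (b \<in> E) (c \<in> E)}}"
    obtain w \<beta> D1 D2 D3 where e: "om = (w, \<beta>, D1, D2, D3)" by (cases om) auto
    have w: "w \<in> set_pmf (PA m r s)" and b: "\<beta> \<in> set_pmf (Pb m r)" using om by (auto simp: e Om_def)
    have pass: "\<forall>l<s. w l \<in> Gs x m"
      using PA_support[OF w _ r m] xnth by (fastforce simp: Gs_def)
    have z: "zv m x \<beta> = p"
      using Pb_support[OF b r] xnth lp by (auto simp: zv_def intro: nth_equalityI)
    show "om \<in> {(w, \<beta>, D1, D2, D3). crun K (m * r) (tester m r s q w \<beta> D1 D2 D3) x [] = Some True}"
      using clean_om[OF r m lx K om[unfolded e]] pass z in1 by (simp add: e E_def)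
  qed
  moreover have "measure_pmf.prob (Om m r s T) {om. snd (snd om) \<in> {(a, b, c). maj (a \<in> E) (b \<in> E) (c \<in> E)}}
      = measure_pmf.prob (pair_pmf T (pair_pmf T T)) {(a, b, c). maj (a \<in> E) (b \<in> E) (c \<in> E)}"
  proof -
    have "measure_pmf.prob (Om m r s T) {om. snd (snd om) \<in> {(a, b, c). maj (a \<in> E) (b \<in> E) (c \<in> E)}}
      = measure_pmf.prob (Om m r s T) {om. snd om \<in> {bd. snd bd \<in> {(a, b, c). maj (a \<in> E) (b \<in> E) (c \<in> E)}}}" by simp
    also have "\<dots> = measure_pmf.prob (pair_pmf (Pb m r) (pair_pmf T (pair_pmf T T))) {bd. snd bd \<in> {(a, b, c). maj (a \<in> E) (b \<in> E) (c \<in> E)}}"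
      unfolding Om_def by (rule prob_snd)
    also have "\<dots> = measure_pmf.prob (pair_pmf T (pair_pmf T T)) {(a, b, c). maj (a \<in> E) (b \<in> E) (c \<in> E)}"
      by (rule prob_snd)
    finally show ?thesis .
  qed
  moreover have "measure_pmf.prob (pair_pmf T (pair_pmf T T)) {(a, b, c). maj (a \<in> E) (b \<in> E) (c \<in> E)} \<ge> 20 / 27"
    by (rule maj_prob[OF PE])
  ultimately show ?thesis by (simp add: prob_Tp)
qed


lemma maj_neg: "maj (\<not> a) (\<not> b) (\<not> c) = (\<not> maj a b c)"
  by (auto simp: maj_def)

lemma far_prob:
  assumes r: "0 < r" and m: "0 < m" and lx: "length x = m * r" and K: "2 * s + 3 * q \<le> K"
    and std: "std_tester P (\<epsilon> / 2) m q T" and x: "far \<epsilon> (rep_prop r P) x"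
    and eps: "0 < \<epsilon>" and sdef: "120 / \<epsilon> \<le> real s"
  shows "measure_pmf.prob (Tp m r s q T) {S. crun K (m * r) S x [] = Some False} \<ge> 37 / 54"
proof -
  let ?z = "\<lambda>\<beta>. zv m x \<beta>"
  define Pass where "Pass = {w. \<forall>l<s. w l \<in> Gs x m}"
  define Acc where "Acc = {(\<beta>, D1, D2, D3). maj (res q m D1 (?z \<beta>) []) (res q m D2 (?z \<beta>) []) (res q m D3 (?z \<beta>) [])}"
  define Dm where "Dm = real (S3 x m r) / (real r * real m * real r)"
  define NF where "NF = {\<beta>. \<epsilon> / 2 \<le> hdist x (rep r (?z \<beta>))}"
  have lx': "length x = r * m" using lx by simp
  have "measure_pmf.prob (Om m r s T) (- (Pass \<times> Acc))
      \<le> measure_pmf.prob (Om m r s T) {(w, \<beta>, D1, D2, D3). crun K (m * r) (tester m r s q w \<beta> D1 D2 D3) x [] = Some False}"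
  proof (rule prob_mono_supp)
    fix om assume om: "om \<in> set_pmf (Om m r s T)" and in1: "om \<in> - (Pass \<times> Acc)"
    obtain w \<beta> D1 D2 D3 where e: "om = (w, \<beta>, D1, D2, D3)" by (cases om) auto
    show "om \<in> {(w, \<beta>, D1, D2, D3). crun K (m * r) (tester m r s q w \<beta> D1 D2 D3) x [] = Some False}"
      using clean_om[OF r m lx K om[unfolded e]] in1 by (auto simp: e Pass_def Acc_def)
  qed
  moreover have "measure_pmf.prob (Om m r s T) (- (Pass \<times> Acc)) =
      1 - measure_pmf.prob (PA m r s) Pass * measure_pmf.prob (pair_pmf (Pb m r) (pair_pmf T (pair_pmf T T))) Acc"
    by (simp add: prob_compl' Om_def prob_product)
  moreover have pa: "measure_pmf.prob (PA m r s) Pass = (1 - Dm) ^ s"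
  proof -
    have "- Gs x m = {(j, i, c). x ! (j * m + i) \<noteq> x ! (c * m + i)}" by (auto simp: Gs_def)
    hence "measure_pmf.prob (trip m r) (- Gs x m) = Dm" using trip_prob[OF r m, of x] by (simp add: Dm_def)
    hence "measure_pmf.prob (trip m r) (Gs x m) = 1 - Dm" by (simp add: prob_compl')
    thus ?thesis using pass_prob_PA[of m r s x] by (simp add: Pass_def)
  qed
  moreover have acc: "measure_pmf.prob (pair_pmf (Pb m r) (pair_pmf T (pair_pmf T T))) Acc \<le> measure_pmf.prob (Pb m r) NF + 7 / 27"
  proof (rule prob_pair_split)
    fix \<beta> assume "\<beta> \<in> set_pmf (Pb m r)" and nf: "\<beta> \<notin> NF"
    have lz: "length (?z \<beta>) = m" by (simp add: zv_def)
    have farz: "far (\<epsilon> / 2) P (?z \<beta>)"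
    proof (rule ccontr)
      assume "\<not> far (\<epsilon> / 2) P (?z \<beta>)"
      then obtain p where p: "p \<in> P" "length p = m" "hdist (?z \<beta>) p < \<epsilon> / 2"
        using lz by (auto simp: far_def)
      have "hdist x (rep r (?z \<beta>)) > \<epsilon> / 2" by (rule far_step[OF x lx' r p(1) p(2) lz p(3)])
      thus False using nf by (simp add: NF_def)
    qed
    define E where "E = {D. res q m D (?z \<beta>) [] = False}"
    have PE: "measure_pmf.prob T E \<ge> 2 / 3"
    proof -
      have "measure_pmf.prob T {D. run q m D (\<lambda>_. ?z \<beta>) [] [] = Some False} \<ge> 2 / 3"
        using std farz lz by (auto simp: std_tester_def)
      moreover have "{D. run q m D (\<lambda>_. ?z \<beta>) [] [] = Some False} \<subseteq> E"
        by (auto simp: E_def res_def run_const split: option.splits)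
      hence "measure_pmf.prob T {D. run q m D (\<lambda>_. ?z \<beta>) [] [] = Some False} \<le> measure_pmf.prob T E"
        by (rule measure_pmf.finite_measure_mono) simp
      ultimately show ?thesis by simp
    qed
    have M: "measure_pmf.prob (pair_pmf T (pair_pmf T T)) {(a, b, c). maj (a \<in> E) (b \<in> E) (c \<in> E)} \<ge> 20 / 27"
      by (rule maj_prob[OF PE])
    have "{Ds. (\<beta>, Ds) \<in> Acc} = - {(a, b, c). maj (a \<in> E) (b \<in> E) (c \<in> E)}"
      by (auto simp: Acc_def E_def maj_def)
    hence "measure_pmf.prob (pair_pmf T (pair_pmf T T)) {Ds. (\<beta>, Ds) \<in> Acc} =
           1 - measure_pmf.prob (pair_pmf T (pair_pmf T T)) {(a, b, c). maj (a \<in> E) (b \<in> E) (c \<in> E)}"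
      by (simp add: prob_compl')
    thus "measure_pmf.prob (pair_pmf T (pair_pmf T T)) {Ds. (\<beta>, Ds) \<in> Acc} \<le> 7 / 27" using M by simp
  qed simp
  moreover have nf: "measure_pmf.prob (Pb m r) NF \<le> Dm / (\<epsilon> / 2)"
    unfolding NF_def Dm_def by (rule markov_f[OF r m lx']) (use eps in simp)
  moreover have D01: "0 \<le> Dm" "Dm \<le> 1"
  proof -
    have "- Gs x m = {(j, i, c). x ! (j * m + i) \<noteq> x ! (c * m + i)}" by (auto simp: Gs_def)
    hence "measure_pmf.prob (trip m r) (- Gs x m) = Dm" using trip_prob[OF r m, of x] by (simp add: Dm_def)
    thus "0 \<le> Dm" "Dm \<le> 1" using measure_nonneg measure_pmf.prob_le_1 by metis+
  qed
  moreover have "0 \<le> measure_pmf.prob (pair_pmf (Pb m r) (pair_pmf T (pair_pmf T T))) Acc"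
    "measure_pmf.prob (pair_pmf (Pb m r) (pair_pmf T (pair_pmf T T))) Acc \<le> 1" by simp_all
  moreover have "1 - (1 - Dm) ^ s * measure_pmf.prob (pair_pmf (Pb m r) (pair_pmf T (pair_pmf T T))) Acc \<ge> 37 / 54"
  proof -
    define g where "g = measure_pmf.prob (pair_pmf (Pb m r) (pair_pmf T (pair_pmf T T))) Acc"
    have g01: "0 \<le> g" "g \<le> 1" by (simp_all add: g_def)
    have pa01: "0 \<le> (1 - Dm) ^ s" "(1 - Dm) ^ s \<le> 1" using D01 by (simp_all add: power_le_one)
    show ?thesis
    proof (cases "Dm \<ge> \<epsilon> / 40")
      case True
      have "real s * Dm \<ge> (120 / \<epsilon>) * (\<epsilon> / 40)"
        using True sdef eps by (intro mult_mono) auto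
      hence sD: "real s * Dm \<ge> 3" using eps by simp
      have "(1 - Dm) ^ s \<le> 1 / (1 + real s * Dm)" by (rule pow_le_inv[OF D01])
      also have "\<dots> \<le> 1 / 4" using sD by (simp add: divide_le_eq)
      finally have "(1 - Dm) ^ s * g \<le> 1 / 4" using g01 pa01 by (meson mult_le_one order_trans mult_right_le_one_le) 
      thus ?thesis by (simp add: g_def)
    next
      case False
      have "measure_pmf.prob (Pb m r) NF \<le> Dm / (\<epsilon> / 2)" by (rule nf)
      also have "\<dots> \<le> 1 / 20" using False eps by (simp add: field_simps)
      finally have "g \<le> 1 / 20 + 7 / 27" using acc by (simp add: g_def)
      moreover have "(1 - Dm) ^ s * g \<le> g" using g01 pa01 by (simp add: mult_left_le_one_le)
      ultimately show ?thesis by (simp add: g_def)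
    qed
  qed
  ultimately show ?thesis by (simp add: prob_Tp)
qed


lemma main_nondeg:
  fixes T :: "'a strategy pmf"
  assumes r: "0 < r" and m: "0 < m" and K: "2 * s + 3 * q \<le> K"
    and std: "std_tester P (\<epsilon> / 2) m q T"
    and eps: "0 < \<epsilon>" and sdef: "120 / \<epsilon> \<le> real s"
    and bad: "real (K * K * t) / real r \<le> 1 / 54"
  shows "oc_tester (rep_prop r P) \<epsilon> t (m * r) K (Tp m r s q T)"
  unfolding oc_tester_def
proof (intro allI impI conjI)
  fix x :: "'a list" and orc assume lx: "length x = m * r" and oc: "oc_oracle t x orc"
  have sp: "spread r (map_pmf (\<lambda>S. cql K (m * r) S x []) (Tp m r s q T))"
    by (rule spread_Tp[OF r m lx K])
  have bb: "measure_pmf.prob (Tp m r s q T) {S. run K (m * r) S orc [] [] = Some v} \<ge>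
      measure_pmf.prob (Tp m r s q T) {S. crun K (m * r) S x [] = Some v} - real (K * K * t) / real r" for v
    by (rule bad_bound[OF oc lx r sp])
  {
    assume "x \<in> rep_prop r P"
    hence "measure_pmf.prob (Tp m r s q T) {S. crun K (m * r) S x [] = Some True} \<ge> 20 / 27"
      by (rule member_prob[OF r m lx K std])
    thus "2 / 3 \<le> measure_pmf.prob (Tp m r s q T) {D. run K (m * r) D orc [] [] = Some True}"
      using bb[of True] bad by linarith
  }
  {
    assume "far \<epsilon> (rep_prop r P) x"
    hence "measure_pmf.prob (Tp m r s q T) {S. crun K (m * r) S x [] = Some False} \<ge> 37 / 54"
      by (rule far_prob[OF r m lx K std _ eps sdef])
    thus "2 / 3 \<le> measure_pmf.prob (Tp m r s q T) {D. run K (m * r) D orc [] [] = Some False}"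
      using bb[of False] bad by linarith
  }
qed

lemma degenerate:
  assumes "0 < \<epsilon>"
  shows "oc_tester S \<epsilon> t 0 K (return_pmf (\<lambda>_. Inr ([] \<in> S)))"
  unfolding oc_tester_def
proof (intro allI impI conjI)
  fix x :: "'a list" and orc assume "length x = 0"
  hence x: "x = []" by simp
  have run: "run K 0 (\<lambda>_. Inr ([] \<in> S)) orc [] [] = Some ([] \<in> S)" by (cases K) simp_all
  {
    assume "x \<in> S"
    thus "2 / 3 \<le> measure_pmf.prob (return_pmf (\<lambda>_. Inr ([] \<in> S))) {D. run K 0 D orc [] [] = Some True}"
      using run x by simp
  }
  {
    assume "far \<epsilon> S x"
    hence "[] \<notin> S" using x assms by (auto simp: far_def hdist_self)
    thus "2 / 3 \<le> measure_pmf.prob (return_pmf (\<lambda>_. Inr ([] \<in> S))) {D. run K 0 D orc [] [] = Some False}"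
      using run by simp
  }
qed

theorem lemma3p5:
  fixes P :: "('a::finite) list set" and q :: "nat \<Rightarrow> real \<Rightarrow> nat"
  assumes testable: "\<forall>\<epsilon>. 0 < \<epsilon> \<and> \<epsilon> < 1 \<longrightarrow> (\<forall>m. \<exists>T. std_tester P \<epsilon> m (q m \<epsilon>) T)"
    and omega: "\<exists>c>0. \<forall>m \<epsilon>. 0 < \<epsilon> \<and> \<epsilon> < 1 \<longrightarrow> real (q m \<epsilon>) \<ge> c / \<epsilon>"
  shows "\<exists>\<delta>0>0. \<forall>\<delta>. 0 < \<delta> \<and> \<delta> < \<delta>0 \<longrightarrow>
    (\<exists>C>0. \<exists>k::nat. \<forall>\<epsilon> m r t. 0 < \<epsilon> \<and> \<epsilon> < 1 \<longrightarrow>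
       real t \<le> \<delta> * real r / (real (q m (\<epsilon>/2)) * log 2 (real (q m (\<epsilon>/2))))\<^sup>2 \<longrightarrow>
       (\<exists>T. oc_tester (rep_prop r P) \<epsilon> t (m * r)
              (nat \<lfloor>C * real (q m (\<epsilon>/2)) * (log 2 (real (q m (\<epsilon>/2)) + 2)) ^ k\<rfloor>) T))"
proof -
  obtain c where c: "c > 0" and qc: "\<And>m \<epsilon>. 0 < \<epsilon> \<Longrightarrow> \<epsilon> < 1 \<Longrightarrow> real (q m \<epsilon>) \<ge> c / \<epsilon>"
    using omega by blast
  define C where "C = 120 / c + 5"
  have C0: "C > 0" using c by (simp add: C_def add_pos_pos)
  define d0 where "d0 = 1 / (54 * C\<^sup>2)"
  have d00: "d0 > 0" using C0 by (simp add: d0_def)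
  have main: "\<exists>T. oc_tester (rep_prop r P) \<epsilon> t (m * r)
              (nat \<lfloor>C * real (q m (\<epsilon>/2)) * (log 2 (real (q m (\<epsilon>/2)) + 2)) ^ 0\<rfloor>) T"
    if \<delta>: "0 < \<delta> \<and> \<delta> < d0" and eps: "0 < \<epsilon> \<and> \<epsilon> < 1"
        and tb: "real t \<le> \<delta> * real r / (real (q m (\<epsilon>/2)) * log 2 (real (q m (\<epsilon>/2))))\<^sup>2"
      for \<delta> \<epsilon> :: real and m r t
    proof -
      define q' where "q' = q m (\<epsilon> / 2)"
      define K where "K = nat \<lfloor>C * real q'\<rfloor>"
      have Keq: "nat \<lfloor>C * real (q m (\<epsilon>/2)) * (log 2 (real (q m (\<epsilon>/2)) + 2)) ^ 0\<rfloor> = K"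
        by (simp add: K_def q'_def)
      show "\<exists>T. oc_tester (rep_prop r P) \<epsilon> t (m * r)
              (nat \<lfloor>C * real (q m (\<epsilon>/2)) * (log 2 (real (q m (\<epsilon>/2)) + 2)) ^ 0\<rfloor>) T"
        unfolding Keq
      proof (cases "m * r = 0")
        case True
        show "\<exists>T. oc_tester (rep_prop r P) \<epsilon> t (m * r) K T"
          unfolding True using degenerate eps by blast
      next
        case False
        hence r: "0 < r" and m: "0 < m" by auto
        have e2: "0 < \<epsilon> / 2 \<and> \<epsilon> / 2 < 1" using eps by simp
        obtain T where std: "std_tester P (\<epsilon> / 2) m q' T"
          using testable e2 unfolding q'_def by blast
        define s where "s = nat \<lceil>120 / \<epsilon>\<rceil>"
        have s1: "120 / \<epsilon> \<le> real s" unfolding s_def by linarith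
        have s2: "real s \<le> 120 / \<epsilon> + 1"
        proof -
          have "0 \<le> 120 / \<epsilon>" using eps by simp
          thus ?thesis unfolding s_def by linarith
        qed
        have qlow: "2 * c / \<epsilon> \<le> real q'"
          using qc[OF conjunct1[OF e2] conjunct2[OF e2], of m] by (simp add: q'_def mult.commute)
        have q1: "1 \<le> real q'"
        proof -
          have "0 < 2 * c / \<epsilon>" using c eps by simp
          hence "0 < q'" using qlow by linarith
          thus ?thesis by simp
        qed
        have inv: "2 / \<epsilon> \<le> real q' / c"
          using qlow c by (simp add: field_simps)
        have Kb: "2 * s + 3 * q' \<le> K"
        proof -
          have "real (2 * s + 3 * q') = 2 * real s + 3 * real q'" by simp
          also have "\<dots> \<le> 120 * (2 / \<epsilon>) + 2 + 3 * real q'" using s2 by simp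
          also have "\<dots> \<le> 120 * (real q' / c) + 2 * real q' + 3 * real q'" using inv q1 by linarith
          also have "\<dots> = C * real q'" by (simp add: C_def field_simps)
          finally show ?thesis unfolding K_def by (intro le_nat_floor) simp
        qed
        have KC: "real K \<le> C * real q'" using C0 q1 by (simp add: K_def)
        have bad: "real (K * K * t) / real r \<le> 1 / 54"
        proof (cases "t = 0")
          case True then show ?thesis by simp
        next
          case False
          have q2: "2 \<le> real q'"
          proof (rule ccontr)
            assume "\<not> 2 \<le> real q'"
            hence "q' = 1" using q1 by linarith
            hence "real t \<le> 0" using tb by (simp add: q'_def[symmetric])
            thus False using False by simp
          qed
          have lg: "1 \<le> log 2 (real q')" using q2 by simp
          have "real q' * real q' \<le> (real q' * log 2 (real q'))\<^sup>2"
          proof -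
            have "real q' \<le> real q' * log 2 (real q')" using lg q1 by (simp add: mult_le_cancel_left1)
            hence "real q' * real q' \<le> (real q' * log 2 (real q')) * (real q' * log 2 (real q'))"
              using q1 by (intro mult_mono) auto
            thus ?thesis by (simp add: power2_eq_square)
          qed
          hence qq: "0 < (real q' * log 2 (real q'))\<^sup>2" using q1 by (smt (verit) mult_pos_pos)
          have "real t * (real q' * log 2 (real q'))\<^sup>2 \<le> \<delta> * real r"
            using tb qq by (simp add: q'_def[symmetric] pos_le_divide_eq)
          hence tq: "real t * (real q' * real q') \<le> \<delta> * real r"
            using \<open>real q' * real q' \<le> _\<close> by (smt (verit) mult_left_mono of_nat_0_le_iff)
          have "real (K * K * t) = real K * real K * real t" by simp
          also have "\<dots> \<le> (C * real q') * (C * real q') * real t"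
            using KC by (intro mult_mono) auto
          also have "\<dots> = C\<^sup>2 * (real t * (real q' * real q'))" by (simp add: power2_eq_square algebra_simps)
          also have "\<dots> \<le> C\<^sup>2 * (\<delta> * real r)" using tq by (intro mult_left_mono) auto
          also have "\<dots> \<le> C\<^sup>2 * (d0 * real r)" using \<delta> by (intro mult_left_mono mult_right_mono) auto
          also have "\<dots> = real r / 54" using C0 by (simp add: d0_def)
          finally show ?thesis using r by (simp add: divide_le_eq)
        qed
        show "\<exists>T. oc_tester (rep_prop r P) \<epsilon> t (m * r) K T"
          using main_nondeg[OF r m Kb std conjunct1[OF eps] s1 bad] by blast
      qed
    qed
  show ?thesis
    apply (rule exI[of _ d0])
    apply (intro conjI d00 allI impI)
    apply (rule exI[of _ C])
    apply (intro conjI C0)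
    apply (rule exI[of _ "0::nat"])
    apply (intro allI impI)
    apply (rule main)
    apply auto
    done
qed


end
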